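(* Let $n\ge 2$, $K\ge 0$ and $p\in\mathbb{Z}$. Let $I_p=\{\mathbf{k}\in\mathbb{Z}_{\ge0}^n:\ |\mathbf{k}|=K,\ k_1\ge k_2+1-p,\ k_2\ge p\}$ and $II_p=\{\mathbf{k}\in\mathbb{Z}_{\ge0}^n:\ |\mathbf{k}|=K,\ k_1\ge -p,\ k_2\ge k_1+1+p\}$, and define $\phi_p:I_p\to II_p$ and $\psi_p:II_p\to I_p$ both by $(k_1,k_2,k_3,\dots,k_n)\mapsto(k_2-p,k_1+p,k_3,\dots,k_n)$. Then: (1) $\phi_p$ and $\psi_p$ are well defined and establish bijections between $I_p$ and $II_p$; (2) for every $\mathbf{k}\in I_p$ and generic values of the remaining variables, \[ \operatorname{Res}_{u_1=u_2q^p}X_{\mathbf{k}}(\mathbf{u};\mathbf{v})+\operatorname{Res}_{u_1=u_2q^p}X_{\phi_p(\mathbf{k})}(\mathbf{u};\mathbf{v})=0, \qquad \operatorname{Res}_{v_2=v_1q^p}Y_{\mathbf{k}}(\mathbf{u};\mathbf{v})+\operatorname{Res}_{v_2=v_1q^p}Y_{\phi_p(\mathbf{k})}(\mathbf{u};\mathbf{v})=0, \] where the residues are taken in the variable $u_1$ (respectively $v_2$).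
   Context: Fix square roots of the complex variables $u_i,v_a,t,q$ and interpret $z^{1/2}$ for monomials $z$ in these variables multiplicatively. For an integer $m\ge0$ the symmetric $q$-Pochhammer symbol is $[z;q]_m=\prod_{l=0}^{m-1}(q^{l/2}z^{1/2}-q^{-l/2}z^{-1/2})$ (empty product $=1$). For $\mathbf{k}\in\mathbb{Z}_{\ge0}^n$ with $|\mathbf{k}|=k_1+\dots+k_n$, $\mathbf{u}=(u_1,\dots,u_n)$, $\mathbf{v}=(v_1,\dots,v_n)$, define $X_{\mathbf{k}}(\mathbf{u};\mathbf{v})=\prod_{i=1}^n\frac{[qt;q]_{k_i}}{[q;q]_{k_i}}\prod_{i\ne j}\frac{[t^{-1}q^{-k_j}u_i/u_j;q]_{k_i}}{[q^{-k_j}u_i/u_j;q]_{k_i}}\prod_{a,j=1}^n\frac{[tu_j/v_a;q]_{k_j}}{[u_j/v_a;q]_{k_j}}$ and $Y_{\mathbf{k}}(\mathbf{u};\mathbf{v})=\prod_{a=1}^n\frac{[qt;q]_{k_a}}{[q;q]_{k_a}}\prod_{a\ne b}\frac{[t^{-1}q^{-k_a}v_a/v_b;q]_{k_b}}{[q^{-k_a}v_a/v_b;q]_{k_b}}\prod_{a,j=1}^n\frac{[tu_j/v_a;q]_{k_a}}{[u_j/v_a;q]_{k_a}}$, with $t,q$ generic parameters. *)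

theory Defs
  imports "HOL-Complex_Analysis.Complex_Analysis"
begin

text \<open>All variables are represented by their fixed square roots:
  su i = u_i^(1/2), sv a = v_a^(1/2), st = t^(1/2), sq = q^(1/2).
  A q-Pochhammer symbol [z;q]_m is given via s = z^(1/2):
  [z;q]_m = prod_{l<m} (q^(l/2) z^(1/2) - q^(-l/2) z^(-1/2)).\<close>

definition qpoch :: "complex \<Rightarrow> complex \<Rightarrow> nat \<Rightarrow> complex" where
  "qpoch sq s m = (\<Prod>l<m. sq ^ l * s - inverse (sq ^ l * s))"

definition Xfun :: "('n::finite \<Rightarrow> nat) \<Rightarrow> ('n \<Rightarrow> complex) \<Rightarrow> ('n \<Rightarrow> complex)
    \<Rightarrow> complex \<Rightarrow> complex \<Rightarrow> complex" where
  "Xfun k su sv st sq =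
     (\<Prod>i\<in>UNIV. qpoch sq (sq * st) (k i) / qpoch sq sq (k i)) *
     (\<Prod>(i,j)\<in>{(i,j). i \<noteq> j}.
        qpoch sq (inverse st * inverse sq ^ k j * su i / su j) (k i) /
        qpoch sq (inverse sq ^ k j * su i / su j) (k i)) *
     (\<Prod>(a,j)\<in>UNIV.
        qpoch sq (st * su j / sv a) (k j) / qpoch sq (su j / sv a) (k j))"

definition Yfun :: "('n::finite \<Rightarrow> nat) \<Rightarrow> ('n \<Rightarrow> complex) \<Rightarrow> ('n \<Rightarrow> complex)
    \<Rightarrow> complex \<Rightarrow> complex \<Rightarrow> complex" where
  "Yfun k su sv st sq =
     (\<Prod>a\<in>UNIV. qpoch sq (sq * st) (k a) / qpoch sq sq (k a)) *
     (\<Prod>(a,b)\<in>{(a,b). a \<noteq> b}.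
        qpoch sq (inverse st * inverse sq ^ k a * sv a / sv b) (k b) /
        qpoch sq (inverse sq ^ k a * sv a / sv b) (k b)) *
     (\<Prod>(a,j)\<in>UNIV.
        qpoch sq (st * su j / sv a) (k a) / qpoch sq (su j / sv a) (k a))"

definition sqrt_branch :: "complex \<Rightarrow> complex \<Rightarrow> complex" where
  "sqrt_branch s0 w = s0 * csqrt (w / s0 ^ 2)"

text \<open>The index sets I_p, II_p and the map (k1,k2,...) |-> (k2-p, k1+p, ...),
  where positions 1,2 are the distinct indices i1, i2.\<close>
definition Iset :: "'n \<Rightarrow> 'n \<Rightarrow> nat \<Rightarrow> int \<Rightarrow> ('n::finite \<Rightarrow> nat) set" where
  "Iset i1 i2 K p = {k. sum k UNIV = K \<and> int (k i1) \<ge> int (k i2) + 1 - p \<and> int (k i2) \<ge> p}"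

definition IIset :: "'n \<Rightarrow> 'n \<Rightarrow> nat \<Rightarrow> int \<Rightarrow> ('n::finite \<Rightarrow> nat) set" where
  "IIset i1 i2 K p = {k. sum k UNIV = K \<and> int (k i1) \<ge> - p \<and> int (k i2) \<ge> int (k i1) + 1 + p}"

definition swapmap :: "'n \<Rightarrow> 'n \<Rightarrow> int \<Rightarrow> ('n \<Rightarrow> nat) \<Rightarrow> ('n \<Rightarrow> nat)" where
  "swapmap i1 i2 p k = k(i1 := nat (int (k i2) - p), i2 := nat (int (k i1) + p))"

end

theory Submission
  imports Defs
begin

lemma sum_split2:
  fixes f :: "'n::finite \<Rightarrow> 'a::comm_monoid_add"
  assumes "i1 \<noteq> i2"
  shows "sum f UNIV = f i1 + f i2 + sum f (UNIV - {i1, i2})"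
proof -
  have "UNIV = insert i1 (insert i2 (UNIV - {i1,i2}))" by auto
  then have "sum f UNIV = sum f (insert i1 (insert i2 (UNIV - {i1,i2})))" by simp
  also have "\<dots> = f i1 + f i2 + sum f (UNIV - {i1, i2})" using assms by (simp add: add.assoc)
  finally show ?thesis .
qed

lemma prod_split2:
  fixes f :: "'n::finite \<Rightarrow> 'a::comm_monoid_mult"
  assumes "i1 \<noteq> i2"
  shows "prod f UNIV = f i1 * f i2 * prod f (UNIV - {i1, i2})"
proof -
  have "UNIV = insert i1 (insert i2 (UNIV - {i1,i2}))" by auto
  then have "prod f UNIV = prod f (insert i1 (insert i2 (UNIV - {i1,i2})))" by simp
  also have "\<dots> = f i1 * f i2 * prod f (UNIV - {i1, i2})" using assms by (simp add: mult.assoc)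
  finally show ?thesis .
qed

lemma swapmap_I:
  assumes "i1 \<noteq> i2" "k \<in> Iset i1 i2 K p"
  shows "swapmap i1 i2 p k \<in> IIset i1 i2 K p"
    and "swapmap i1 i2 p (swapmap i1 i2 p k) = k"
proof -
  have s: "sum k UNIV = K" and h1: "int (k i1) \<ge> int (k i2) + 1 - p" and h2: "int (k i2) \<ge> p"
    using assms(2) by (auto simp: Iset_def)
  let ?k = "swapmap i1 i2 p k"
  have a: "?k i1 = nat (int (k i2) - p)" "?k i2 = nat (int (k i1) + p)"
    using assms(1) by (auto simp: swapmap_def)
  have r: "sum ?k (UNIV - {i1,i2}) = sum k (UNIV - {i1,i2})"
    by (rule sum.cong) (auto simp: swapmap_def)
  have "sum ?k UNIV = K"
    using sum_split2[OF assms(1), of ?k] sum_split2[OF assms(1), of k] s a r h1 h2 by linarith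
  then show "?k \<in> IIset i1 i2 K p" using a h1 h2 by (auto simp: IIset_def)
  show "swapmap i1 i2 p ?k = k"
    using a h1 h2 assms(1) by (auto simp: swapmap_def fun_eq_iff)
qed

lemma swapmap_II:
  assumes "i1 \<noteq> i2" "k \<in> IIset i1 i2 K p"
  shows "swapmap i1 i2 p k \<in> Iset i1 i2 K p"
    and "swapmap i1 i2 p (swapmap i1 i2 p k) = k"
proof -
  have s: "sum k UNIV = K" and h1: "int (k i1) \<ge> - p" and h2: "int (k i2) \<ge> int (k i1) + 1 + p"
    using assms(2) by (auto simp: IIset_def)
  let ?k = "swapmap i1 i2 p k"
  have a: "?k i1 = nat (int (k i2) - p)" "?k i2 = nat (int (k i1) + p)"
    using assms(1) by (auto simp: swapmap_def)
  have r: "sum ?k (UNIV - {i1,i2}) = sum k (UNIV - {i1,i2})"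
    by (rule sum.cong) (auto simp: swapmap_def)
  have "sum ?k UNIV = K"
    using sum_split2[OF assms(1), of ?k] sum_split2[OF assms(1), of k] s a r h1 h2 by linarith
  then show "?k \<in> Iset i1 i2 K p" using a h1 h2 by (auto simp: Iset_def)
  show "swapmap i1 i2 p ?k = k"
    using a h1 h2 assms(1) by (auto simp: swapmap_def fun_eq_iff)
qed

lemma bij_part:
  assumes "i1 \<noteq> i2"
  shows "bij_betw (swapmap i1 i2 p) (Iset i1 i2 K p) (IIset i1 i2 K p)"
    and "bij_betw (swapmap i1 i2 p) (IIset i1 i2 K p) (Iset i1 i2 K p)"
  using swapmap_I[OF assms] swapmap_II[OF assms]
  by (auto intro!: bij_betw_byWitness[where f'="swapmap i1 i2 p"])

lemma IIset_eq: "IIset i1 i2 K p = Iset i2 i1 K (-p)"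
  by (auto simp: IIset_def Iset_def)

lemma swapmap_sym: "i1 \<noteq> i2 \<Longrightarrow> swapmap i2 i1 (-p) = swapmap i1 i2 p"
  by (auto simp: swapmap_def fun_eq_iff)

lemma prod_int_range:
  "(\<Prod>l<n. h (c + int l)) = (\<Prod>m\<in>{c..<c+int n}. (h m :: 'a::comm_monoid_mult))"
proof (induction n)
  case 0 then show ?case by simp
next
  case (Suc n)
  have e: "{c..<c + int (Suc n)} = insert (c + int n) {c..<c+int n}" by auto
  have "prod h {c..<c+int (Suc n)} = h (c+int n) * prod h {c..<c+int n}" unfolding e by (subst prod.insert) auto
  then show ?case using Suc by (simp add: mult.commute)
qed

lemma prod_list_msets:
  fixes h :: "int \<Rightarrow> 'a::comm_monoid_mult"
  assumes "\<forall>A\<in>set As. finite A" "\<forall>B\<in>set Bs. finite B"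
    and "sum_list (map mset_set As) = sum_list (map mset_set Bs)"
  shows "prod_list (map (prod h) As) = prod_list (map (prod h) Bs)"
proof -
  have *: "prod_list (map (prod h) Cs) = prod_mset (image_mset h (sum_list (map mset_set Cs)))"
    if "\<forall>A\<in>set Cs. finite A" for Cs :: "int set list"
    using that by (induction Cs) (auto simp: prod_unfold_prod_mset)
  show ?thesis using *[OF assms(1)] *[OF assms(2)] assms(3) by simp
qed

lemma seg_test:
  fixes a b :: nat and p :: int
  assumes "int b \<ge> p" "int a + p \<ge> 0"
  shows "mset_set {p..<p+int a} + mset_set {0..<int b} = mset_set {p..<p + int (nat (int b - p))} + mset_set {0..<int (nat (int a + p))}"
  apply (rule multiset_eqI)
  using assms by (simp add: count_mset_set')

definition Hq :: "complex \<Rightarrow> complex \<Rightarrow> int \<Rightarrow> complex" where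
  "Hq Q \<beta> m = Q powi m * \<beta> - inverse (Q powi m * \<beta>)"

definition qpoch_ex :: "complex \<Rightarrow> complex \<Rightarrow> nat \<Rightarrow> nat \<Rightarrow> complex" where
  "qpoch_ex sq s m l0 = (\<Prod>l\<in>{..<m} - {l0}. sq ^ l * s - inverse (sq ^ l * s))"

lemma qpoch_split:
  assumes "l0 < m"
  shows "qpoch sq s m = (sq ^ l0 * s - inverse (sq ^ l0 * s)) * qpoch_ex sq s m l0"
  unfolding qpoch_def qpoch_ex_def using assms
  by (subst prod.remove[of _ l0]) auto

lemma qpoch_shift:
  assumes "Q \<noteq> 0"
  shows "qpoch Q (Q powi c * \<beta>) n = prod (Hq Q \<beta>) {c..<c+int n}"
proof -
  have "qpoch Q (Q powi c * \<beta>) n = (\<Prod>l<n. Hq Q \<beta> (c + int l))"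
    unfolding qpoch_def Hq_def
    by (rule prod.cong) (auto simp: power_int_add assms mult.assoc mult.commute)
  then show ?thesis by (simp add: prod_int_range)
qed

lemma qpoch_ex_shift:
  assumes "Q \<noteq> 0" "l0 < n"
  shows "qpoch_ex Q (Q powi c * \<beta>) n l0 = prod (Hq Q \<beta>) ({c..<c+int n} - {c + int l0})"
proof -
  have "qpoch_ex Q (Q powi c * \<beta>) n l0 = (\<Prod>l\<in>{..<n}-{l0}. Hq Q \<beta> (c + int l))"
    unfolding qpoch_ex_def Hq_def
    by (rule prod.cong) (auto simp: power_int_add assms mult.assoc mult.commute)
  also have "\<dots> = prod (Hq Q \<beta>) ((\<lambda>l. c + int l) ` ({..<n}-{l0}))"
    by (subst prod.reindex) (auto simp: inj_on_def)
  also have "(\<lambda>l. c + int l) ` ({..<n}-{l0}) = {c..<c+int n} - {c + int l0}"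
  proof
    show "{c..<c+int n} - {c + int l0} \<subseteq> (\<lambda>l. c + int l) ` ({..<n}-{l0})"
    proof
      fix x assume "x \<in> {c..<c+int n} - {c + int l0}"
      then show "x \<in> (\<lambda>l. c + int l) ` ({..<n}-{l0})"
        by (intro image_eqI[of _ _ "nat (x - c)"]) auto
    qed
  qed auto
  finally show ?thesis .
qed


lemma Hq_neg:
  assumes "Q \<noteq> 0"
  shows "Hq Q \<beta> m = - Hq Q (inverse \<beta>) (- m)"
  unfolding Hq_def by (simp add: power_int_minus)

lemma Hq1_odd: "Hq Q 1 (- m) = - Hq Q 1 m"
  unfolding Hq_def by (simp add: power_int_minus)


lemma prod_reflect:
  fixes h :: "int \<Rightarrow> complex"
  assumes "\<And>m. h (- m) = - h m" "\<alpha> \<le> \<beta>"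
  shows "prod h {\<alpha>..<\<beta>} = (-1) ^ nat (\<beta> - \<alpha>) * prod h {1-\<beta>..<1-\<alpha>}"
proof -
  have "prod h {\<alpha>..<\<beta>} = prod (\<lambda>b. - h b) {1-\<beta>..<1-\<alpha>}"
    by (rule prod.reindex_bij_witness[where i=uminus and j=uminus]) (auto simp: assms)
  also have "\<dots> = prod (\<lambda>_. -1) {1-\<beta>..<1-\<alpha>} * prod h {1-\<beta>..<1-\<alpha>}"
    by (subst prod.distrib[symmetric]) simp
  also have "prod (\<lambda>_. -1::complex) {1-\<beta>..<1-\<alpha>} = (-1) ^ nat (\<beta> - \<alpha>)"
    by simp
  finally show ?thesis .
qed

lemma qpochA:
  assumes "Q \<noteq> 0"
  shows "qpoch Q (Q * T) n = (-1) ^ n * prod (Hq Q (inverse T)) {- int n..<0}"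
proof -
  have "qpoch Q (Q * T) n = qpoch Q (Q powi 1 * T) n" by simp
  also have "\<dots> = prod (Hq Q T) {1..<1 + int n}" by (rule qpoch_shift[OF assms])
  also have "\<dots> = prod (\<lambda>b. - Hq Q (inverse T) b) {- int n..<0}"
    by (rule prod.reindex_bij_witness[where i=uminus and j=uminus]) (auto, subst Hq_neg[OF assms], simp)
  also have "\<dots> = prod (\<lambda>_. -1) {- int n..<0} * prod (Hq Q (inverse T)) {- int n..<0}"
    by (subst prod.distrib[symmetric]) simp
  finally show ?thesis by simp
qed

lemma qpochQ:
  assumes "Q \<noteq> 0"
  shows "qpoch Q Q n = prod (Hq Q 1) {1..<1 + int n}"
  using qpoch_shift[OF assms, of 1 1 n] by simp

lemma seg:
  assumes "Q \<noteq> 0" "int b \<ge> p" "int a + p \<ge> 0"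
  shows "qpoch Q (Q powi p * \<beta>) a * qpoch Q \<beta> b
       = qpoch Q (Q powi p * \<beta>) (nat (int b - p)) * qpoch Q \<beta> (nat (int a + p))"
proof -
  have e: "qpoch Q \<beta> n = qpoch Q (Q powi 0 * \<beta>) n" for n by simp
  show ?thesis
    unfolding e qpoch_shift[OF assms(1)]
    using prod_list_msets[of "[{p..<p+int a}, {0..<0+int b}]" "[{p..<p+int (nat (int b - p))}, {0..<0 + int (nat (int a + p))}]" "Hq Q \<beta>"]
    using seg_test[OF assms(2,3)] by simp
qed

lemma rearr4:
  fixes x1 x2 y1 y2 y3 y4 x1' x2' z1 z2 z3 z4 :: complex
  assumes "y1 * y2 * y3 * y4 = z1 * z2 * z3 * z4" "x1 * x2 = x1' * x2'"
  shows "x1 * y1 * (x2 * y2) * y3 * y4 = x1' * z1 * (x2' * z2) * z3 * z4"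
proof -
  have "x1 * y1 * (x2 * y2) * y3 * y4 = (x1 * x2) * (y1 * y2 * y3 * y4)" by (simp add: ac_simps)
  also have "\<dots> = (x1' * x2') * (z1 * z2 * z3 * z4)" using assms by simp
  also have "\<dots> = x1' * z1 * (x2' * z2) * z3 * z4" by (simp add: ac_simps)
  finally show ?thesis .
qed

lemma core_num:
  fixes a b :: nat
  assumes "Q \<noteq> 0" "int b \<ge> p" "int a + p \<ge> int b + 1"
  shows "qpoch Q (Q * T) a * qpoch Q (Q * T) b * qpoch Q (Q powi (p - int b) * inverse T) a
           * qpoch Q (Q powi (- int a - p) * inverse T) b
       = qpoch Q (Q * T) (nat (int b - p)) * qpoch Q (Q * T) (nat (int a + p))
           * qpoch Q (Q powi (p - int (nat (int a + p))) * inverse T) (nat (int b - p))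
           * qpoch Q (Q powi (- int (nat (int b - p)) - p) * inverse T) (nat (int a + p))"
proof -
  define g where "g = Hq Q (inverse T)"
  have sgn: "(-1::complex) ^ a * (-1) ^ b = (-1) ^ nat (int b - p) * (-1) ^ nat (int a + p)"
  proof -
    have "a + b = nat (int b - p) + nat (int a + p)" using assms by linarith
    then show ?thesis by (simp add: power_add[symmetric])
  qed
  have ms: "sum_list (map mset_set [{- int a..<0}, {- int b..<0}, {p - int b..<p - int b + int a}, {- int a - p..<- int a - p + int b}])
     = sum_list (map mset_set [{- int (nat (int b - p))..<0}, {- int (nat (int a + p))..<0},
          {p - int (nat (int a + p))..<p - int (nat (int a + p)) + int (nat (int b - p))},
          {- int (nat (int b - p)) - p..<- int (nat (int b - p)) - p + int (nat (int a + p))}])"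
    apply (simp only: list.map sum_list_simps)
    apply (rule multiset_eqI)
    using assms by (simp add: count_mset_set')
  have pe: "prod g {- int a..<0} * prod g {- int b..<0} * prod g {p - int b..<p - int b + int a} * prod g {- int a - p..<- int a - p + int b}
     = prod g {- int (nat (int b - p))..<0} * prod g {- int (nat (int a + p))..<0} *
          prod g {p - int (nat (int a + p))..<p - int (nat (int a + p)) + int (nat (int b - p))} *
          prod g {- int (nat (int b - p)) - p..<- int (nat (int b - p)) - p + int (nat (int a + p))}"
    using prod_list_msets[OF _ _ ms, of g] by (simp add: mult.assoc)
  show ?thesis
    unfolding qpochA[OF assms(1)] qpoch_shift[OF assms(1)] g_def[symmetric]
    using pe sgn
    by (rule rearr4)
qed

lemma rearr5:
  fixes s1 s2 y1 y2 y3 y4 y5 z1 z2 z3 z4 z5 :: complex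
  assumes "y1 * y2 * y3 * y4 * y5 = z1 * z2 * z3 * z4 * z5"
  shows "y1 * y2 * (s1 * y3 * y4) * (s2 * y5) = z1 * z2 * (s1 * z3) * (s2 * z4 * z5)"
proof -
  have "y1 * y2 * (s1 * y3 * y4) * (s2 * y5) = (s1 * s2) * (y1 * y2 * y3 * y4 * y5)" by (simp add: ac_simps)
  also have "\<dots> = (s1 * s2) * (z1 * z2 * z3 * z4 * z5)" using assms by simp
  also have "\<dots> = z1 * z2 * (s1 * z3) * (s2 * z4 * z5)" by (simp add: ac_simps)
  finally show ?thesis .
qed

lemma core_den:
  fixes a b a' b' :: nat
  assumes Q: "Q \<noteq> 0" and h: "int b \<ge> p" "int a + p \<ge> int b + 1"
    and a': "int a' = int b - p" and b': "int b' = int a + p"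
  shows "qpoch Q Q a * qpoch Q Q b * qpoch_ex Q (Q powi (p - int b) * 1) a a'
           * qpoch Q (Q powi (- int a - p) * 1) b
       = qpoch Q Q a' * qpoch Q Q b' * qpoch Q (Q powi (p - int b') * 1) a'
           * qpoch_ex Q (Q powi (- int a' - p) * 1) b' b"
proof -
  define g where "g = Hq Q 1"
  have odd: "\<And>m. g (- m) = - g m" unfolding g_def by (rule Hq1_odd)
  have L1: "qpoch_ex Q (Q powi (p - int b) * 1) a a' = prod g {p - int b..<0} * prod g {1..<p - int b + int a}"
  proof -
    have "qpoch_ex Q (Q powi (p - int b) * 1) a a' = prod g ({p - int b..<p - int b + int a} - {p - int b + int a'})"
      unfolding g_def using h a' by (intro qpoch_ex_shift[OF Q]) linarith
    also have "{p - int b..<p - int b + int a} - {p - int b + int a'} = {p - int b..<0} \<union> {1..<p - int b + int a}"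
      using a' h by auto
    also have "prod g \<dots> = prod g {p - int b..<0} * prod g {1..<p - int b + int a}"
      by (rule prod.union_disjoint) auto
    finally show ?thesis .
  qed
  have L1r: "prod g {p - int b..<0} = (-1) ^ a' * prod g {1..<1 + int b - p}"
  proof -
    have "nat (0 - (p - int b)) = a'" using a' by simp
    then show ?thesis using prod_reflect[where h=g, OF odd, of "p - int b" 0] h a' by (simp add: algebra_simps)
  qed
  have L2: "qpoch Q (Q powi (- int a - p) * 1) b = (-1) ^ b * prod g {1 + int a + p - int b..<1 + int a + p}"
    unfolding qpoch_shift[OF Q] g_def[symmetric]
    using prod_reflect[where h=g, OF odd, of "- int a - p" "- int a - p + int b"] by (simp add: algebra_simps)
  have R1: "qpoch Q (Q powi (p - int b') * 1) a' = (-1) ^ a' * prod g {1 + int a - int a'..<1 + int a}"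
    unfolding qpoch_shift[OF Q] g_def[symmetric]
    using prod_reflect[where h=g, OF odd, of "p - int b'" "p - int b' + int a'"] b' by (simp add: algebra_simps)
  have R2: "qpoch_ex Q (Q powi (- int a' - p) * 1) b' b = prod g {- int b..<0} * prod g {1..<int b' - int b}"
  proof -
    have "qpoch_ex Q (Q powi (- int a' - p) * 1) b' b = prod g ({- int a' - p..<- int a' - p + int b'} - {- int a' - p + int b})"
      unfolding g_def using h b' by (intro qpoch_ex_shift[OF Q]) linarith
    also have "{- int a' - p..<- int a' - p + int b'} - {- int a' - p + int b} = {- int b..<0} \<union> {1..<int b' - int b}"
      using a' b' h by auto
    also have "prod g \<dots> = prod g {- int b..<0} * prod g {1..<int b' - int b}"
      by (rule prod.union_disjoint) auto
    finally show ?thesis .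
  qed
  have R2r: "prod g {- int b..<0} = (-1) ^ b * prod g {1..<1 + int b}"
    using prod_reflect[where h=g, OF odd, of "- int b" 0] by simp
  have ms: "sum_list (map mset_set [{1..<1 + int a}, {1..<1 + int b}, {1..<1 + int b - p}, {1..<p - int b + int a}, {1 + int a + p - int b..<1 + int a + p}])
     = sum_list (map mset_set [{1..<1 + int a'}, {1..<1 + int b'}, {1 + int a - int a'..<1 + int a}, {1..<1 + int b}, {1..<int b' - int b}])"
    apply (simp only: list.map sum_list_simps)
    apply (rule multiset_eqI)
    using h a' b' by (simp add: count_mset_set')
  have pe: "prod g {1..<1 + int a} * prod g {1..<1 + int b} * prod g {1..<1 + int b - p} * prod g {1..<p - int b + int a} * prod g {1 + int a + p - int b..<1 + int a + p}
     = prod g {1..<1 + int a'} * prod g {1..<1 + int b'} * prod g {1 + int a - int a'..<1 + int a} * prod g {1..<1 + int b} * prod g {1..<int b' - int b}"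
    using prod_list_msets[OF _ _ ms, of g] by (simp add: mult.assoc)
  show ?thesis
    unfolding L1 L1r L2 R1 R2 R2r qpochQ[OF Q] g_def[symmetric]
    using pe by (rule rearr5)
qed

lemma res_abstract:
  fixes N Dn E Z :: "complex \<Rightarrow> complex"
  assumes A: "open A" "w0 \<in> A" and hN: "N holomorphic_on A" and hD: "Dn holomorphic_on A"
    and hE: "E holomorphic_on A"
    and fac: "\<And>w. w \<in> A \<Longrightarrow> Dn w = Z w * E w"
    and dZ: "(Z has_field_derivative dZ) (at w0)" and Z0: "Z w0 = 0" and dZnz: "dZ \<noteq> 0"
    and E0: "E w0 \<noteq> 0"
  shows "residue (\<lambda>w. N w / Dn w) w0 = N w0 / (dZ * E w0)"
proof -
  have q: "((\<lambda>w. (Z w - Z w0) / (w - w0)) \<longlongrightarrow> dZ) (at w0)"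
    using dZ by (simp add: has_field_derivative_iff)
  have ev1: "eventually (\<lambda>w. (Z w - Z w0) / (w - w0) \<noteq> 0) (at w0)"
    by (rule tendsto_imp_eventually_ne[OF q dZnz])
  have contE: "isCont E w0"
    using hE A holomorphic_on_imp_continuous_on continuous_on_eq_continuous_at by blast
  have contN: "isCont N w0"
    using hN A holomorphic_on_imp_continuous_on continuous_on_eq_continuous_at by blast
  have tE: "(E \<longlongrightarrow> E w0) (at w0)" using contE by (simp add: isCont_def)
  have tN: "(N \<longlongrightarrow> N w0) (at w0)" using contN by (simp add: isCont_def)
  have ev2: "eventually (\<lambda>w. E w \<noteq> 0) (at w0)"
    by (rule tendsto_imp_eventually_ne[OF tE E0])
  have ev3: "eventually (\<lambda>w. w \<in> A) (at w0)" by (rule eventually_at_in_open'[OF A])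
  have ev: "eventually (\<lambda>w. w \<in> A \<and> Dn w \<noteq> 0) (at w0)"
    using ev1 ev2 ev3
  proof eventually_elim
    case (elim w)
    then have "Z w \<noteq> 0" using Z0 by auto
    then show ?case using elim fac by auto
  qed
  then obtain B where B: "open B" "w0 \<in> B" "\<And>w. w \<in> B \<Longrightarrow> w \<noteq> w0 \<Longrightarrow> w \<in> A \<and> Dn w \<noteq> 0"
    unfolding eventually_at_topological by blast
  define C where "C = B \<inter> A"
  have C: "open C" "w0 \<in> C" using B A by (auto simp: C_def)
  have hol: "(\<lambda>w. N w / Dn w) holomorphic_on C - {w0}"
    by (rule holomorphic_on_divide) (use hN hD B in \<open>auto simp: C_def intro: holomorphic_on_subset\<close>)
  have lim: "((\<lambda>w. N w / Dn w * (w - w0)) \<longlongrightarrow> N w0 / (dZ * E w0)) (at w0)"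
  proof -
    have t: "((\<lambda>w. N w / ((Z w - Z w0) / (w - w0) * E w)) \<longlongrightarrow> N w0 / (dZ * E w0)) (at w0)"
      by (intro tendsto_intros tN q tE) (use dZnz E0 in auto)
    have "eventually (\<lambda>w. N w / ((Z w - Z w0) / (w - w0) * E w) = N w / Dn w * (w - w0)) (at w0)"
      using ev3 eventually_at[of "\<lambda>w. True" w0 UNIV]
    proof -
      have "eventually (\<lambda>w. w \<noteq> w0) (at w0)" by (simp add: eventually_at_filter)
      then show ?thesis using ev3
      proof eventually_elim
        case (elim w)
        then show ?case using fac[of w] Z0 by (simp add: field_simps)
      qed
    qed
    then show ?thesis using t by (rule Lim_transform_eventually[rotated])
  qed
  show ?thesis by (rule residue_simple'[OF C hol lim])
qed

definition Aq :: "('n \<Rightarrow> nat) \<Rightarrow> complex \<Rightarrow> complex \<Rightarrow> 'n \<Rightarrow> complex" where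
  "Aq k \<sigma> sq i = qpoch sq (sq * \<sigma>) (k i)"
definition Bq :: "('n \<Rightarrow> nat) \<Rightarrow> ('n \<Rightarrow> complex) \<Rightarrow> complex \<Rightarrow> complex \<Rightarrow> 'n \<Rightarrow> 'n \<Rightarrow> complex" where
  "Bq k su \<tau> sq i j = qpoch sq (\<tau> * inverse sq ^ k j * su i / su j) (k i)"
definition Cq :: "('n \<Rightarrow> nat) \<Rightarrow> ('n \<Rightarrow> complex) \<Rightarrow> ('n \<Rightarrow> complex) \<Rightarrow> complex \<Rightarrow> complex \<Rightarrow> 'n \<Rightarrow> 'n \<Rightarrow> complex" where
  "Cq k su sv \<sigma> sq a j = qpoch sq (\<sigma> * su j / sv a) (k j)"

definition XP :: "('n::finite \<Rightarrow> nat) \<Rightarrow> ('n \<Rightarrow> complex) \<Rightarrow> ('n \<Rightarrow> complex) \<Rightarrow> complex \<Rightarrow> complex \<Rightarrow> complex \<Rightarrow> complex" where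
  "XP k su sv \<tau> \<sigma> sq = (\<Prod>i\<in>UNIV. Aq k \<sigma> sq i) * (\<Prod>(i,j)\<in>{(i,j). i \<noteq> j}. Bq k su \<tau> sq i j)
     * (\<Prod>(a,j)\<in>UNIV. Cq k su sv \<sigma> sq a j)"

definition RestP :: "'n \<Rightarrow> 'n \<Rightarrow> ('n::finite \<Rightarrow> nat) \<Rightarrow> ('n \<Rightarrow> complex) \<Rightarrow> ('n \<Rightarrow> complex) \<Rightarrow> complex \<Rightarrow> complex \<Rightarrow> complex \<Rightarrow> complex" where
  "RestP j1 j2 k su sv \<tau> \<sigma> sq =
     (\<Prod>i\<in>UNIV - {j1,j2}. Aq k \<sigma> sq i)
   * (\<Prod>m\<in>UNIV - {j1,j2}. Bq k su \<tau> sq j1 m * Bq k su \<tau> sq m j1 * Bq k su \<tau> sq j2 m * Bq k su \<tau> sq m j2)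
   * (\<Prod>i\<in>UNIV - {j1,j2}. \<Prod>j\<in>UNIV - {j1,j2} - {i}. Bq k su \<tau> sq i j)
   * (\<Prod>a\<in>UNIV. Cq k su sv \<sigma> sq a j1 * Cq k su sv \<sigma> sq a j2 * (\<Prod>j\<in>UNIV - {j1,j2}. Cq k su sv \<sigma> sq a j))"

lemma prod_case_divide:
  "(\<Prod>(i,j)\<in>S. (f i j / g i j :: complex)) = (\<Prod>(i,j)\<in>S. f i j) / (\<Prod>(i,j)\<in>S. g i j)"
  by (simp add: case_prod_unfold prod_dividef)

lemma Xfun_XP: "Xfun k su sv st sq = XP k su sv (inverse st) st sq / XP k su sv 1 1 sq"
  unfolding Xfun_def XP_def Aq_def Bq_def Cq_def prod_case_divide prod_dividef
  by simp

lemma offd_split: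
  fixes F :: "'n::finite \<Rightarrow> 'n \<Rightarrow> 'a::comm_monoid_mult"
  assumes "j1 \<noteq> j2"
  shows "(\<Prod>(i,j)\<in>{(i,j). i \<noteq> j}. F i j) = F j1 j2 * F j2 j1
     * (\<Prod>m\<in>UNIV - {j1,j2}. F j1 m * F m j1 * F j2 m * F m j2)
     * (\<Prod>i\<in>UNIV - {j1,j2}. \<Prod>j\<in>UNIV - {j1,j2} - {i}. F i j)"
proof -
  let ?R = "UNIV - {j1,j2}"
  have e: "{(i,j). i \<noteq> j} = Sigma UNIV (\<lambda>i. UNIV - {i})" by auto
  have "(\<Prod>(i,j)\<in>{(i,j). i \<noteq> j}. F i j) = (\<Prod>i\<in>UNIV. \<Prod>j\<in>UNIV - {i}. F i j)"
    unfolding e by (subst prod.Sigma) auto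
  also have "\<dots> = (\<Prod>j\<in>UNIV - {j1}. F j1 j) * (\<Prod>j\<in>UNIV - {j2}. F j2 j) * (\<Prod>i\<in>?R. \<Prod>j\<in>UNIV - {i}. F i j)"
    by (rule prod_split2[OF assms])
  also have "(\<Prod>j\<in>UNIV - {j1}. F j1 j) = F j1 j2 * (\<Prod>m\<in>?R. F j1 m)"
  proof -
    have "UNIV - {j1} = insert j2 ?R" using assms by auto
    then show ?thesis by (simp add: prod.insert)
  qed
  also have "(\<Prod>j\<in>UNIV - {j2}. F j2 j) = F j2 j1 * (\<Prod>m\<in>?R. F j2 m)"
  proof -
    have "UNIV - {j2} = insert j1 ?R" using assms by auto
    then show ?thesis by (simp add: prod.insert)
  qed
  also have "(\<Prod>i\<in>?R. \<Prod>j\<in>UNIV - {i}. F i j) = (\<Prod>i\<in>?R. F i j1 * F i j2 * (\<Prod>j\<in>?R - {i}. F i j))"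
  proof (rule prod.cong[OF refl])
    fix i assume i: "i \<in> ?R"
    have "UNIV - {i} = insert j1 (insert j2 (?R - {i}))" using i by auto
    then show "(\<Prod>j\<in>UNIV - {i}. F i j) = F i j1 * F i j2 * (\<Prod>j\<in>?R - {i}. F i j)"
      using i assms by (simp add: prod.insert mult.assoc)
  qed
  also have "\<dots> = (\<Prod>i\<in>?R. F i j1) * (\<Prod>i\<in>?R. F i j2) * (\<Prod>i\<in>?R. \<Prod>j\<in>?R - {i}. F i j)"
    by (simp add: prod.distrib)
  finally show ?thesis by (simp add: prod.distrib ac_simps)
qed

lemma XP_split:
  assumes "j1 \<noteq> j2"
  shows "XP k su sv \<tau> \<sigma> sq = (Aq k \<sigma> sq j1 * Aq k \<sigma> sq j2 * Bq k su \<tau> sq j1 j2 * Bq k su \<tau> sq j2 j1)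
     * RestP j1 j2 k su sv \<tau> \<sigma> sq"
proof -
  have c: "(\<Prod>(a,j)\<in>UNIV. Cq k su sv \<sigma> sq a j) = (\<Prod>a\<in>UNIV. Cq k su sv \<sigma> sq a j1 * Cq k su sv \<sigma> sq a j2 * (\<Prod>j\<in>UNIV - {j1,j2}. Cq k su sv \<sigma> sq a j))"
  proof -
    have "(\<Prod>(a,j)\<in>UNIV. Cq k su sv \<sigma> sq a j) = (\<Prod>a\<in>UNIV. \<Prod>j\<in>UNIV. Cq k su sv \<sigma> sq a j)"
      by (simp add: prod.cartesian_product UNIV_Times_UNIV[symmetric] del: UNIV_Times_UNIV)
    also have "\<dots> = (\<Prod>a\<in>UNIV. Cq k su sv \<sigma> sq a j1 * Cq k su sv \<sigma> sq a j2 * (\<Prod>j\<in>UNIV - {j1,j2}. Cq k su sv \<sigma> sq a j))"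
      by (rule prod.cong[OF refl], rule prod_split2[OF assms])
    finally show ?thesis .
  qed
  show ?thesis
    unfolding XP_def RestP_def c offd_split[OF assms] prod_split2[OF assms, of "Aq k \<sigma> sq"]
    by (simp add: ac_simps)
qed

lemma pw: "Q \<noteq> 0 \<Longrightarrow> int n + p = int m \<Longrightarrow> (Q::complex) ^ n * Q powi p = Q ^ m"
  by (metis power_int_add power_int_of_nat)

lemma pwi: "Q \<noteq> 0 \<Longrightarrow> int n + p = int m \<Longrightarrow> inverse ((Q::complex) ^ n) * inverse (Q powi p) = inverse (Q ^ m)"
  by (metis pw inverse_mult_distrib)

lemma swapmap_vals:
  assumes "j1 \<noteq> j2"
  shows "swapmap j1 j2 p k j1 = nat (int (k j2) - p)" "swapmap j1 j2 p k j2 = nat (int (k j1) + p)"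
    "m \<notin> {j1,j2} \<Longrightarrow> swapmap j1 j2 p k m = k m"
  using assms by (auto simp: swapmap_def)

lemma rearrB:
  fixes x y x' y' c d :: complex
  assumes "x * y = x' * y'"
  shows "x * c * y * d = x' * d * y' * c"
proof -
  have "x * c * y * d = (x * y) * (c * d)" by (simp add: ac_simps)
  also have "\<dots> = (x' * y') * (c * d)" using assms by simp
  finally show ?thesis by (simp add: ac_simps)
qed

lemma Rest_eq:
  assumes j: "j1 \<noteq> j2" and Q: "Q \<noteq> 0" and h: "int (k j2) \<ge> p" "int (k j1) + p \<ge> int (k j2) + 1"
  shows "RestP j1 j2 k (U(j1 := U j2 * Q powi p)) V \<tau> \<sigma> Q
       = RestP j1 j2 (swapmap j1 j2 p k) (U(j1 := U j2 * Q powi p)) V \<tau> \<sigma> Q"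
proof -
  define x0 where "x0 = U j2 * Q powi p"
  define k' where "k' = swapmap j1 j2 p k"
  define su where "su = U(j1 := x0)"
  define a where "a = k j1"
  define b where "b = k j2"
  define a' where "a' = k' j1"
  define b' where "b' = k' j2"
  have ka: "int a' = int b - p" "int b' = int a + p"
    using h swapmap_vals[OF j, where p=p and k=k] by (auto simp: a'_def b'_def a_def b_def k'_def)
  have kR: "\<And>m. m \<in> UNIV - {j1,j2} \<Longrightarrow> k' m = k m"
    using swapmap_vals[OF j] by (auto simp: k'_def)
  have su: "su j1 = x0" "su j2 = U j2" "\<And>m. m \<noteq> j1 \<Longrightarrow> su m = U m"
    using j by (auto simp: su_def)
  have hb: "int b \<ge> p" "int a + p \<ge> 0" using h by (auto simp: a_def b_def)
  have f1: "(\<Prod>i\<in>UNIV - {j1,j2}. Aq k \<sigma> Q i) = (\<Prod>i\<in>UNIV - {j1,j2}. Aq k' \<sigma> Q i)"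
    by (rule prod.cong) (auto simp: Aq_def kR)
  have f3: "(\<Prod>i\<in>UNIV - {j1,j2}. \<Prod>j\<in>UNIV - {j1,j2} - {i}. Bq k su \<tau> Q i j)
          = (\<Prod>i\<in>UNIV - {j1,j2}. \<Prod>j\<in>UNIV - {j1,j2} - {i}. Bq k' su \<tau> Q i j)"
    by (rule prod.cong[OF refl], rule prod.cong[OF refl]) (auto simp: Bq_def kR)
  have f2: "(\<Prod>m\<in>UNIV - {j1,j2}. Bq k su \<tau> Q j1 m * Bq k su \<tau> Q m j1 * Bq k su \<tau> Q j2 m * Bq k su \<tau> Q m j2)
          = (\<Prod>m\<in>UNIV - {j1,j2}. Bq k' su \<tau> Q j1 m * Bq k' su \<tau> Q m j1 * Bq k' su \<tau> Q j2 m * Bq k' su \<tau> Q m j2)"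
  proof (rule prod.cong[OF refl])
    fix m assume m: "m \<in> UNIV - {j1,j2}"
    define \<beta> where "\<beta> = \<tau> * inverse Q ^ k m * U j2 / U m"
    have e1: "\<tau> * inverse Q ^ k m * x0 / U m = Q powi p * \<beta>"
      by (simp add: x0_def \<beta>_def)
    have B1: "Bq k su \<tau> Q j1 m = qpoch Q (Q powi p * \<beta>) a" "Bq k' su \<tau> Q j1 m = qpoch Q (Q powi p * \<beta>) a'"
      using m su e1 kR[OF m] by (auto simp: Bq_def a_def a'_def)
    have B2: "Bq k su \<tau> Q j2 m = qpoch Q \<beta> b" "Bq k' su \<tau> Q j2 m = qpoch Q \<beta> b'"
      using m su kR[OF m] j by (auto simp: Bq_def b_def b'_def \<beta>_def)
    have S: "qpoch Q (Q powi p * \<beta>) a * qpoch Q \<beta> b = qpoch Q (Q powi p * \<beta>) a' * qpoch Q \<beta> b'"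
      using seg[OF Q hb, of \<beta>] ka by (metis nat_int)
    have g1: "Bq k' su \<tau> Q m j2 = Bq k su \<tau> Q m j1"
    proof -
      have "inverse (Q ^ a) * inverse (Q powi p) = inverse (Q ^ b')" using pwi[OF Q] ka by simp
      then have "\<tau> * inverse Q ^ b' * U m / U j2 = \<tau> * inverse Q ^ a * U m / x0"
        by (simp add: x0_def divide_inverse power_inverse ac_simps)
      then show ?thesis using m su kR[OF m] j by (auto simp: Bq_def a_def b'_def)
    qed
    have g2: "Bq k' su \<tau> Q m j1 = Bq k su \<tau> Q m j2"
    proof -
      have "inverse (Q ^ a') * inverse (Q powi p) = inverse (Q ^ b)" using pwi[OF Q] ka by simp
      then have "\<tau> * inverse Q ^ a' * U m / x0 = \<tau> * inverse Q ^ b * U m / U j2"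
        by (simp add: x0_def divide_inverse power_inverse ac_simps)
      then show ?thesis using m su kR[OF m] j by (auto simp: Bq_def a'_def b_def)
    qed
    show "Bq k su \<tau> Q j1 m * Bq k su \<tau> Q m j1 * Bq k su \<tau> Q j2 m * Bq k su \<tau> Q m j2
        = Bq k' su \<tau> Q j1 m * Bq k' su \<tau> Q m j1 * Bq k' su \<tau> Q j2 m * Bq k' su \<tau> Q m j2"
      unfolding g1 g2 B1 B2 using S by (rule rearrB)
  qed
  have f4: "(\<Prod>aa\<in>UNIV. Cq k su V \<sigma> Q aa j1 * Cq k su V \<sigma> Q aa j2 * (\<Prod>j\<in>UNIV - {j1,j2}. Cq k su V \<sigma> Q aa j))
         = (\<Prod>aa\<in>UNIV. Cq k' su V \<sigma> Q aa j1 * Cq k' su V \<sigma> Q aa j2 * (\<Prod>j\<in>UNIV - {j1,j2}. Cq k' su V \<sigma> Q aa j))"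
  proof (rule prod.cong[OF refl])
    fix aa
    define \<beta> where "\<beta> = \<sigma> * U j2 / V aa"
    have C1: "Cq k su V \<sigma> Q aa j1 = qpoch Q (Q powi p * \<beta>) a" "Cq k' su V \<sigma> Q aa j1 = qpoch Q (Q powi p * \<beta>) a'"
      using su by (auto simp: Cq_def a_def a'_def \<beta>_def x0_def ac_simps)
    have C2: "Cq k su V \<sigma> Q aa j2 = qpoch Q \<beta> b" "Cq k' su V \<sigma> Q aa j2 = qpoch Q \<beta> b'"
      using su j by (auto simp: Cq_def b_def b'_def \<beta>_def)
    have S: "qpoch Q (Q powi p * \<beta>) a * qpoch Q \<beta> b = qpoch Q (Q powi p * \<beta>) a' * qpoch Q \<beta> b'"
      using seg[OF Q hb, of \<beta>] ka by (metis nat_int)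
    have R: "(\<Prod>j\<in>UNIV - {j1,j2}. Cq k su V \<sigma> Q aa j) = (\<Prod>j\<in>UNIV - {j1,j2}. Cq k' su V \<sigma> Q aa j)"
      by (rule prod.cong) (auto simp: Cq_def kR)
    show "Cq k su V \<sigma> Q aa j1 * Cq k su V \<sigma> Q aa j2 * (\<Prod>j\<in>UNIV - {j1,j2}. Cq k su V \<sigma> Q aa j)
        = Cq k' su V \<sigma> Q aa j1 * Cq k' su V \<sigma> Q aa j2 * (\<Prod>j\<in>UNIV - {j1,j2}. Cq k' su V \<sigma> Q aa j)"
      unfolding C1 C2 R using S by simp
  qed
  show ?thesis
    unfolding RestP_def x0_def[symmetric] su_def[symmetric] k'_def[symmetric]
    using f1 f2 f3 f4 by simp
qed

lemma conv1:
  assumes "Q \<noteq> 0" "U2 \<noteq> 0"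
  shows "\<tau> * inverse Q ^ n * (U2 * Q powi p) / U2 = Q powi (p - int n) * (\<tau>::complex)"
proof -
  have "inverse Q ^ n = Q powi (- int n)" by (simp add: power_int_minus power_inverse)
  then have i: "inverse Q ^ n * Q powi p = Q powi (p - int n)"
    using assms(1) by (simp add: power_int_add[symmetric])
  have "\<tau> * inverse Q ^ n * (U2 * Q powi p) / U2 = \<tau> * (inverse Q ^ n * Q powi p)"
    using assms(2) by (simp add: divide_inverse ac_simps)
  then show ?thesis using i by (simp add: mult.commute)
qed

lemma conv2:
  assumes "Q \<noteq> 0" "U2 \<noteq> 0"
  shows "\<tau> * inverse Q ^ n * U2 / (U2 * Q powi p) = Q powi (- int n - p) * (\<tau>::complex)"
proof -
  have "inverse Q ^ n = Q powi (- int n)" by (simp add: power_int_minus power_inverse)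
  moreover have "inverse (Q powi p) = Q powi (- p)" by (simp add: power_int_minus)
  ultimately have i: "inverse Q ^ n * inverse (Q powi p) = Q powi (- int n - p)"
    using assms(1) by (simp add: power_int_add[symmetric])
  have "\<tau> * inverse Q ^ n * U2 / (U2 * Q powi p) = \<tau> * (inverse Q ^ n * inverse (Q powi p))"
    using assms(2) by (simp add: divide_inverse ac_simps)
  then show ?thesis using i by (simp add: mult.commute)
qed

lemma Num_eq:
  assumes j: "j1 \<noteq> j2" and Q: "Q \<noteq> 0" and U2: "U j2 \<noteq> 0"
    and h: "int (k j2) \<ge> p" "int (k j1) + p \<ge> int (k j2) + 1"
  shows "XP k (U(j1 := U j2 * Q powi p)) V (inverse T) T Q
       = XP (swapmap j1 j2 p k) (U(j1 := U j2 * Q powi p)) V (inverse T) T Q"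
proof -
  define x0 where "x0 = U j2 * Q powi p"
  define k' where "k' = swapmap j1 j2 p k"
  define su where "su = U(j1 := x0)"
  have su: "su j1 = x0" "su j2 = U j2" using j by (auto simp: su_def)
  have kv: "k' j1 = nat (int (k j2) - p)" "k' j2 = nat (int (k j1) + p)"
    using swapmap_vals[OF j] by (auto simp: k'_def)
  have core: "Aq k T Q j1 * Aq k T Q j2 * Bq k su (inverse T) Q j1 j2 * Bq k su (inverse T) Q j2 j1
     = Aq k' T Q j1 * Aq k' T Q j2 * Bq k' su (inverse T) Q j1 j2 * Bq k' su (inverse T) Q j2 j1"
    unfolding Aq_def Bq_def su x0_def conv1[OF Q U2] conv2[OF Q U2] kv
    using core_num[OF Q h] by simp
  have rest: "RestP j1 j2 k su V (inverse T) T Q = RestP j1 j2 k' su V (inverse T) T Q"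
    unfolding su_def x0_def k'_def by (rule Rest_eq[OF j Q h])
  show ?thesis
    unfolding x0_def[symmetric] su_def[symmetric] k'_def[symmetric] XP_split[OF j] core rest ..
qed

definition zf :: "int \<Rightarrow> complex \<Rightarrow> complex \<Rightarrow> complex \<Rightarrow> complex" where
  "zf p Q U2 x = Q powi (- p) * x / U2 - inverse (Q powi (- p) * x / U2)"

definition Ek :: "'n \<Rightarrow> 'n \<Rightarrow> int \<Rightarrow> ('n::finite \<Rightarrow> nat) \<Rightarrow> ('n \<Rightarrow> complex) \<Rightarrow> ('n \<Rightarrow> complex) \<Rightarrow> complex \<Rightarrow> complex \<Rightarrow> complex" where
  "Ek j1 j2 p k U V Q x = Aq k 1 Q j1 * Aq k 1 Q j2
     * qpoch_ex Q (1 * inverse Q ^ k j2 * x / U j2) (k j1) (nat (int (k j2) - p))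
     * Bq k (U(j1 := x)) 1 Q j2 j1 * RestP j1 j2 k (U(j1 := x)) V 1 1 Q"

definition Ek' :: "'n \<Rightarrow> 'n \<Rightarrow> int \<Rightarrow> ('n::finite \<Rightarrow> nat) \<Rightarrow> ('n \<Rightarrow> complex) \<Rightarrow> ('n \<Rightarrow> complex) \<Rightarrow> complex \<Rightarrow> complex \<Rightarrow> complex" where
  "Ek' j1 j2 p k U V Q x = (let k' = swapmap j1 j2 p k in Aq k' 1 Q j1 * Aq k' 1 Q j2
     * Bq k' (U(j1 := x)) 1 Q j1 j2
     * qpoch_ex Q (1 * inverse Q ^ k' j1 * U j2 / x) (k' j2) (k j2)
     * RestP j1 j2 k' (U(j1 := x)) V 1 1 Q)"

lemma Den_fac:
  assumes j: "j1 \<noteq> j2" and Q: "Q \<noteq> 0"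
    and h: "int (k j2) \<ge> p" "int (k j1) + p \<ge> int (k j2) + 1"
  shows "XP k (U(j1 := x)) V 1 1 Q = zf p Q (U j2) x * Ek j1 j2 p k U V Q x"
proof -
  define su where "su = U(j1 := x)"
  have su: "su j1 = x" "su j2 = U j2" using j by (auto simp: su_def)
  define l0 where "l0 = nat (int (k j2) - p)"
  have l0: "l0 < k j1" using h by (auto simp: l0_def)
  have e: "Q ^ l0 * (1 * inverse Q ^ k j2 * x / U j2) = Q powi (- p) * x / U j2"
  proof -
    have i: "inverse Q ^ k j2 = Q powi (- int (k j2))" by (simp add: power_int_minus power_inverse)
    have "Q ^ l0 * inverse Q ^ k j2 = Q powi (int l0) * Q powi (- int (k j2))" by (simp add: i)
    also have "\<dots> = Q powi (int l0 - int (k j2))" using Q power_int_add[of Q "int l0" "- int (k j2)"] by simp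
    also have "int l0 - int (k j2) = - p" using h by (simp add: l0_def)
    finally have "Q ^ l0 * inverse Q ^ k j2 = Q powi (- p)" .
    then show ?thesis by (simp add: ac_simps)
  qed
  have B: "Bq k su 1 Q j1 j2 = zf p Q (U j2) x * qpoch_ex Q (1 * inverse Q ^ k j2 * x / U j2) (k j1) l0"
    unfolding Bq_def su qpoch_split[OF l0] e zf_def ..
  show ?thesis
    unfolding su_def[symmetric] XP_split[OF j] B Ek_def l0_def[symmetric]
    by (simp add: ac_simps)
qed

lemma Den_fac':
  assumes j: "j1 \<noteq> j2" and Q: "Q \<noteq> 0"
    and h: "int (k j2) \<ge> p" "int (k j1) + p \<ge> int (k j2) + 1"
  shows "XP (swapmap j1 j2 p k) (U(j1 := x)) V 1 1 Q = - zf p Q (U j2) x * Ek' j1 j2 p k U V Q x"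
proof -
  define su where "su = U(j1 := x)"
  define k' where "k' = swapmap j1 j2 p k"
  have su: "su j1 = x" "su j2 = U j2" using j by (auto simp: su_def)
  have kv: "k' j1 = nat (int (k j2) - p)" "k' j2 = nat (int (k j1) + p)"
    using swapmap_vals[OF j] by (auto simp: k'_def)
  have l0: "k j2 < k' j2" using h kv by auto
  have e: "Q ^ k j2 * (1 * inverse Q ^ k' j1 * U j2 / x) = inverse (Q powi (- p) * x / U j2)"
  proof -
    have i: "inverse Q ^ k' j1 = Q powi (- int (k' j1))" by (simp add: power_int_minus power_inverse)
    have "Q ^ k j2 * inverse Q ^ k' j1 = Q powi (int (k j2)) * Q powi (- int (k' j1))" by (simp add: i)
    also have "\<dots> = Q powi (int (k j2) - int (k' j1))" using Q power_int_add[of Q "int (k j2)" "- int (k' j1)"] by simp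
    also have "int (k j2) - int (k' j1) = p" using h kv by simp
    finally have "Q ^ k j2 * inverse Q ^ k' j1 = Q powi p" .
    moreover have "inverse (Q powi (- p) * x / U j2) = Q powi p * U j2 / x"
      by (simp add: power_int_minus divide_inverse ac_simps)
    ultimately show ?thesis by (simp add: ac_simps)
  qed
  have B: "Bq k' su 1 Q j2 j1 = - zf p Q (U j2) x * qpoch_ex Q (1 * inverse Q ^ k' j1 * U j2 / x) (k' j2) (k j2)"
    unfolding Bq_def su qpoch_split[OF l0] e zf_def by simp
  show ?thesis
    unfolding su_def[symmetric] k'_def[symmetric] XP_split[OF j] B Ek'_def Let_def
    by (simp add: ac_simps)
qed

lemma Ek_eq:
  assumes j: "j1 \<noteq> j2" and Q: "Q \<noteq> 0" and U2: "U j2 \<noteq> 0"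
    and h: "int (k j2) \<ge> p" "int (k j1) + p \<ge> int (k j2) + 1"
  shows "Ek j1 j2 p k U V Q (U j2 * Q powi p) = Ek' j1 j2 p k U V Q (U j2 * Q powi p)"
proof -
  define x0 where "x0 = U j2 * Q powi p"
  define k' where "k' = swapmap j1 j2 p k"
  define su where "su = U(j1 := x0)"
  have su: "su j1 = x0" "su j2 = U j2" using j by (auto simp: su_def)
  have kv: "k' j1 = nat (int (k j2) - p)" "k' j2 = nat (int (k j1) + p)"
    using swapmap_vals[OF j] by (auto simp: k'_def)
  have kv': "int (k' j1) = int (k j2) - p" "int (k' j2) = int (k j1) + p" using kv h by auto
  have core: "Aq k 1 Q j1 * Aq k 1 Q j2
     * qpoch_ex Q (1 * inverse Q ^ k j2 * x0 / U j2) (k j1) (nat (int (k j2) - p))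
     * Bq k su 1 Q j2 j1
     = Aq k' 1 Q j1 * Aq k' 1 Q j2 * Bq k' su 1 Q j1 j2
     * qpoch_ex Q (1 * inverse Q ^ k' j1 * U j2 / x0) (k' j2) (k j2)"
    unfolding Aq_def Bq_def su x0_def conv1[OF Q U2] conv2[OF Q U2] kv(1)[symmetric]
    using core_den[OF Q h kv'] by simp
  have rest: "RestP j1 j2 k su V 1 1 Q = RestP j1 j2 k' su V 1 1 Q"
    unfolding su_def x0_def k'_def by (rule Rest_eq[OF j Q h])
  show ?thesis
    unfolding x0_def[symmetric] Ek_def Ek'_def Let_def su_def[symmetric] k'_def[symmetric]
    using core rest by simp
qed

lemma holo_upd [holomorphic_intros]:
  "x holomorphic_on A \<Longrightarrow> (\<lambda>w. (U(j1 := x w)) i) holomorphic_on A"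
  by (cases "i = j1") auto

lemma holo_if [holomorphic_intros]:
  "x holomorphic_on A \<Longrightarrow> (\<lambda>w. if c then x w else (d::complex)) holomorphic_on A"
  by (cases c) auto

lemma nz_upd:
  "(\<And>w. w \<in> A \<Longrightarrow> x w \<noteq> 0) \<Longrightarrow> (\<forall>i. U i \<noteq> 0) \<Longrightarrow> w \<in> A \<Longrightarrow> (U(j1 := x w)) i \<noteq> 0"
  by (cases "i = j1") auto

lemma qpoch_holo:
  assumes "s holomorphic_on A" "\<And>w. w \<in> A \<Longrightarrow> s w \<noteq> 0" "Q \<noteq> 0"
  shows "(\<lambda>w. qpoch Q (s w) n) holomorphic_on A"
  unfolding qpoch_def using assms by (auto intro!: holomorphic_intros)

lemma qpoch_ex_holo:
  assumes "s holomorphic_on A" "\<And>w. w \<in> A \<Longrightarrow> s w \<noteq> 0" "Q \<noteq> 0"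
  shows "(\<lambda>w. qpoch_ex Q (s w) n l0) holomorphic_on A"
  unfolding qpoch_ex_def using assms by (auto intro!: holomorphic_intros)

lemma Bq_holo:
  assumes "x holomorphic_on A" "\<And>w. w \<in> A \<Longrightarrow> x w \<noteq> 0" "\<forall>i. U i \<noteq> 0" "Q \<noteq> 0" "\<tau> \<noteq> 0"
  shows "(\<lambda>w. Bq k (U(j1 := x w)) \<tau> Q i j) holomorphic_on A"
  unfolding Bq_def
  by (rule qpoch_holo) (use assms nz_upd[of A x U] in \<open>auto intro!: holomorphic_intros\<close>)

lemma Cq_holo:
  assumes "x holomorphic_on A" "\<And>w. w \<in> A \<Longrightarrow> x w \<noteq> 0" "\<forall>i. U i \<noteq> 0" "\<forall>a. V a \<noteq> 0" "Q \<noteq> 0" "\<sigma> \<noteq> 0"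
  shows "(\<lambda>w. Cq k (U(j1 := x w)) V \<sigma> Q a j) holomorphic_on A"
  unfolding Cq_def
  by (rule qpoch_holo) (use assms nz_upd[of A x U] in \<open>auto intro!: holomorphic_intros\<close>)

lemma XP_holo:
  assumes "x holomorphic_on A" "\<And>w. w \<in> A \<Longrightarrow> x w \<noteq> 0" "\<forall>i. U i \<noteq> 0" "\<forall>a. V a \<noteq> 0" "Q \<noteq> 0"
    "\<sigma> \<noteq> 0" "\<tau> \<noteq> 0"
  shows "(\<lambda>w. XP k (U(j1 := x w)) V \<tau> \<sigma> Q) holomorphic_on A"
proof -
  have B: "(\<lambda>w. \<Prod>(i,j)\<in>{(i,j). i \<noteq> j}. Bq k (U(j1 := x w)) \<tau> Q i j) holomorphic_on A"
    by (rule holomorphic_on_prod) (auto simp: case_prod_unfold intro!: Bq_holo assms)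
  have C: "(\<lambda>w. \<Prod>(a,j)\<in>UNIV. Cq k (U(j1 := x w)) V \<sigma> Q a j) holomorphic_on A"
    by (rule holomorphic_on_prod) (auto simp: case_prod_unfold intro!: Cq_holo assms)
  show ?thesis unfolding XP_def
    by (intro holomorphic_on_mult B C) auto
qed

lemma RestP_holo:
  assumes "x holomorphic_on A" "\<And>w. w \<in> A \<Longrightarrow> x w \<noteq> 0" "\<forall>i. U i \<noteq> 0" "\<forall>a. V a \<noteq> 0" "Q \<noteq> 0"
    "\<sigma> \<noteq> 0" "\<tau> \<noteq> 0"
  shows "(\<lambda>w. RestP j1 j2 k (U(j1 := x w)) V \<tau> \<sigma> Q) holomorphic_on A"
  unfolding RestP_def
  by (intro holomorphic_on_mult holomorphic_on_prod holomorphic_on_const Bq_holo Cq_holo assms)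

lemma Ek_holo:
  assumes "x holomorphic_on A" "\<And>w. w \<in> A \<Longrightarrow> x w \<noteq> 0" "\<forall>i. U i \<noteq> 0" "\<forall>a. V a \<noteq> 0" "Q \<noteq> 0"
  shows "(\<lambda>w. Ek j1 j2 p k U V Q (x w)) holomorphic_on A"
  unfolding Ek_def
  by (intro holomorphic_on_mult holomorphic_on_const Bq_holo RestP_holo assms qpoch_ex_holo)
     (use assms in \<open>auto intro!: holomorphic_intros\<close>)

lemma Ek'_holo:
  assumes "x holomorphic_on A" "\<And>w. w \<in> A \<Longrightarrow> x w \<noteq> 0" "\<forall>i. U i \<noteq> 0" "\<forall>a. V a \<noteq> 0" "Q \<noteq> 0"
  shows "(\<lambda>w. Ek' j1 j2 p k U V Q (x w)) holomorphic_on A"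
  unfolding Ek'_def Let_def
  by (intro holomorphic_on_mult holomorphic_on_const Bq_holo RestP_holo assms qpoch_ex_holo)
     (use assms in \<open>auto intro!: holomorphic_intros\<close>)

definition Good :: "int \<Rightarrow> ('n \<Rightarrow> complex) \<Rightarrow> ('n \<Rightarrow> complex) \<Rightarrow> complex \<Rightarrow> complex \<Rightarrow> bool" where
  "Good M U V T Q \<longleftrightarrow> T \<noteq> 0 \<and> Q \<noteq> 0 \<and> (\<forall>i. U i \<noteq> 0) \<and> (\<forall>a. V a \<noteq> 0) \<and>
    (\<forall>m. m \<noteq> 0 \<and> \<bar>m\<bar> \<le> M \<longrightarrow> (Q powi m)^2 \<noteq> 1) \<and>
    (\<forall>i j m. i \<noteq> j \<and> \<bar>m\<bar> \<le> M \<longrightarrow> (Q powi m * (U i / U j))^2 \<noteq> 1) \<and>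
    (\<forall>i j m. i \<noteq> j \<and> \<bar>m\<bar> \<le> M \<longrightarrow> (Q powi m * (V i / V j))^2 \<noteq> 1) \<and>
    (\<forall>j a m. \<bar>m\<bar> \<le> M \<longrightarrow> (Q powi m * (U j / V a))^2 \<noteq> 1)"

lemma nzH: "e \<noteq> 0 \<Longrightarrow> e^2 \<noteq> 1 \<Longrightarrow> e - inverse e \<noteq> (0::complex)"
proof
  assume "e \<noteq> 0" "e^2 \<noteq> 1" "e - inverse e = 0"
  then have "e * e = e * inverse e" by simp
  then show False using \<open>e \<noteq> 0\<close> \<open>e^2 \<noteq> 1\<close> by (simp add: power2_eq_square)
qed

lemma Hq_nz:
  assumes "Q \<noteq> 0" "\<beta> \<noteq> 0" "(Q powi m * \<beta>)^2 \<noteq> 1"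
  shows "Hq Q \<beta> m \<noteq> 0"
  unfolding Hq_def by (rule nzH) (use assms in auto)

lemma nz_qpochB:
  assumes Q: "Q \<noteq> 0" and b: "\<beta> \<noteq> 0" and c: "\<And>m. \<bar>m\<bar> \<le> M \<Longrightarrow> (Q powi m * \<beta>)^2 \<noteq> 1"
    and r: "- M \<le> c" "c + int n \<le> M + 1"
  shows "qpoch Q (Q powi c * \<beta>) n \<noteq> 0"
proof -
  have "\<forall>m\<in>{c..<c+int n}. Hq Q \<beta> m \<noteq> 0"
  proof
    fix m assume "m \<in> {c..<c+int n}"
    then have "\<bar>m\<bar> \<le> M" using r by auto
    then show "Hq Q \<beta> m \<noteq> 0" by (intro Hq_nz[OF Q b] c)
  qed
  then show ?thesis unfolding qpoch_shift[OF Q] by (simp add: prod_zero_iff)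
qed

lemma nz_qpochQ:
  assumes Q: "Q \<noteq> 0" and c: "\<And>m. m \<noteq> 0 \<Longrightarrow> \<bar>m\<bar> \<le> M \<Longrightarrow> (Q powi m)^2 \<noteq> 1"
    and r: "- M \<le> c" "c + int n \<le> M + 1" "0 < c \<or> c + int n \<le> 0"
  shows "qpoch Q (Q powi c * 1) n \<noteq> 0"
proof -
  have "\<forall>m\<in>{c..<c+int n}. Hq Q 1 m \<noteq> 0"
  proof
    fix m assume "m \<in> {c..<c+int n}"
    then have "\<bar>m\<bar> \<le> M" "m \<noteq> 0" using r by auto
    then show "Hq Q 1 m \<noteq> 0" by (intro Hq_nz[OF Q]) (auto dest: c)
  qed
  then show ?thesis unfolding qpoch_shift[OF Q] by (simp add: prod_zero_iff)
qed

lemma nz_qpoch_exQ: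
  assumes Q: "Q \<noteq> 0" and c: "\<And>m. m \<noteq> 0 \<Longrightarrow> \<bar>m\<bar> \<le> M \<Longrightarrow> (Q powi m)^2 \<noteq> 1"
    and r: "- M \<le> c" "c + int n \<le> M + 1" "c + int l0 = 0" "l0 < n"
  shows "qpoch_ex Q (Q powi c * 1) n l0 \<noteq> 0"
proof -
  have "\<forall>m\<in>{c..<c+int n} - {c + int l0}. Hq Q 1 m \<noteq> 0"
  proof
    fix m assume "m \<in> {c..<c+int n} - {c + int l0}"
    then have "\<bar>m\<bar> \<le> M" "m \<noteq> 0" using r by auto
    then show "Hq Q 1 m \<noteq> 0" by (intro Hq_nz[OF Q]) (auto dest: c)
  qed
  then show ?thesis unfolding qpoch_ex_shift[OF Q r(4)] by (simp add: prod_zero_iff)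
qed

lemma cvp: "Q \<noteq> 0 \<Longrightarrow> inverse Q ^ n * Q powi p = Q powi (p - int n)" for Q :: complex
proof -
  assume Q: "Q \<noteq> 0"
  have "inverse Q ^ n = Q powi (- int n)" by (simp add: power_int_minus power_inverse)
  then show ?thesis using Q by (simp add: power_int_add[symmetric])
qed

lemma cvm: "inverse Q ^ n = Q powi (- int n)" for Q :: complex
  by (simp add: power_int_minus power_inverse)

lemma Good_U: "Good M U V T Q \<Longrightarrow> U i \<noteq> 0" by (simp add: Good_def)
lemma Good_V: "Good M U V T Q \<Longrightarrow> V i \<noteq> 0" by (simp add: Good_def)
lemma Good_Q: "Good M U V T Q \<Longrightarrow> Q \<noteq> 0" by (simp add: Good_def)
lemma Good_T: "Good M U V T Q \<Longrightarrow> T \<noteq> 0" by (simp add: Good_def)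
lemma Good_q: "Good M U V T Q \<Longrightarrow> m \<noteq> 0 \<Longrightarrow> \<bar>m\<bar> \<le> M \<Longrightarrow> (Q powi m)^2 \<noteq> 1" by (simp add: Good_def)
lemma Good_UU: "Good M U V T Q \<Longrightarrow> i \<noteq> j \<Longrightarrow> \<bar>m\<bar> \<le> M \<Longrightarrow> (Q powi m * (U i / U j))^2 \<noteq> 1" by (simp add: Good_def)
lemma Good_UV: "Good M U V T Q \<Longrightarrow> \<bar>m\<bar> \<le> M \<Longrightarrow> (Q powi m * (U j / V a))^2 \<noteq> 1" by (simp add: Good_def)

lemma Aq_nz:
  assumes G: "Good M U V T Q" and "int (k i) \<le> M"
  shows "Aq k 1 Q i \<noteq> 0"
proof -
  have "qpoch Q (Q powi 1 * 1) (k i) \<noteq> 0"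
    by (rule nz_qpochQ[OF Good_Q[OF G] Good_q[OF G]]) (use assms in auto)
  then show ?thesis by (simp add: Aq_def)
qed

lemma Bq_nz:
  assumes G: "Good M U V T Q" and j: "j1 \<noteq> j2" "i \<noteq> j" "(i,j) \<noteq> (j1,j2)" "(i,j) \<noteq> (j2,j1)"
    and kb: "int (k i) \<le> K" "int (k j) \<le> K" "K + \<bar>p\<bar> \<le> M"
  shows "Bq k (U(j1 := U j2 * Q powi p)) 1 Q i j \<noteq> 0"
proof -
  have Q: "Q \<noteq> 0" using G by (simp add: Good_def)
  have U: "\<And>i. U i \<noteq> 0" using G by (simp add: Good_def)
  consider "i = j1" | "j = j1" | "i \<noteq> j1" "j \<noteq> j1" by blast
  then show ?thesis
  proof cases
    case 1
    then have jj: "j \<noteq> j2" "j \<noteq> j1" using j by auto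
    have s: "1 * inverse Q ^ k j * (U(j1 := U j2 * Q powi p)) i / (U(j1 := U j2 * Q powi p)) j
        = Q powi (p - int (k j)) * (U j2 / U j)"
      using 1 jj by (simp add: cvp[OF Q, symmetric] divide_inverse ac_simps)
    show ?thesis unfolding Bq_def s
      by (rule nz_qpochB[OF Q _ Good_UU[OF G]]) (use U kb jj in auto)
  next
    case 2
    then have ii: "i \<noteq> j2" "i \<noteq> j1" using j by auto
    have s: "1 * inverse Q ^ k j * (U(j1 := U j2 * Q powi p)) i / (U(j1 := U j2 * Q powi p)) j
        = Q powi (- int (k j) - p) * (U i / U j2)"
    proof -
      have "inverse Q ^ k j * inverse (Q powi p) = Q powi (- int (k j) - p)"
        using Q by (simp add: cvm power_int_minus[symmetric] power_int_add[symmetric])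
      then show ?thesis using 2 ii by (simp add: divide_inverse ac_simps)
    qed
    show ?thesis unfolding Bq_def s
      by (rule nz_qpochB[OF Q _ Good_UU[OF G]]) (use U kb ii in auto)
  next
    case 3
    have s: "1 * inverse Q ^ k j * (U(j1 := U j2 * Q powi p)) i / (U(j1 := U j2 * Q powi p)) j
        = Q powi (- int (k j)) * (U i / U j)"
      using 3 by (simp add: cvm divide_inverse ac_simps)
    show ?thesis unfolding Bq_def s
      by (rule nz_qpochB[OF Q _ Good_UU[OF G]]) (use U kb j in auto)
  qed
qed

lemma Cq_nz:
  assumes G: "Good M U V T Q" and kb: "int (k j) \<le> K" "K + \<bar>p\<bar> \<le> M"
  shows "Cq k (U(j1 := U j2 * Q powi p)) V 1 Q a j \<noteq> 0"
proof -
  have Q: "Q \<noteq> 0" using G by (simp add: Good_def)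
  have V: "V a \<noteq> 0" "U j \<noteq> 0" "U j2 \<noteq> 0" using G by (auto simp: Good_def)
  show ?thesis
  proof (cases "j = j1")
    case True
    have s: "1 * (U(j1 := U j2 * Q powi p)) j / V a = Q powi p * (U j2 / V a)"
      using True by simp
    show ?thesis unfolding Cq_def s
      by (rule nz_qpochB[OF Q _ Good_UV[OF G]]) (use V kb in auto)
  next
    case False
    have s: "1 * (U(j1 := U j2 * Q powi p)) j / V a = Q powi 0 * (U j / V a)"
      using False by simp
    show ?thesis unfolding Cq_def s
      by (rule nz_qpochB[OF Q _ Good_UV[OF G]]) (use V kb in auto)
  qed
qed

lemma RestP_nz:
  assumes G: "Good M U V T Q" and j: "j1 \<noteq> j2"
    and kb: "\<And>i. int (k i) \<le> K" "K + \<bar>p\<bar> \<le> M"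
  shows "RestP j1 j2 k (U(j1 := U j2 * Q powi p)) V 1 1 Q \<noteq> 0"
proof -
  have M: "\<And>i. int (k i) \<le> M" using kb by (smt (verit))
  have A: "\<And>i. Aq k 1 Q i \<noteq> 0" by (rule Aq_nz[OF G], rule M)
  show ?thesis
  unfolding RestP_def
  using j A Bq_nz[OF G j _ _ _ kb(1) kb(1) kb(2)] Cq_nz[OF G kb(1) kb(2)]
  by (auto simp: prod_zero_iff)
qed

lemma kle: "k \<in> Iset j1 j2 K p \<Longrightarrow> k i \<le> K"
  unfolding Iset_def using member_le_sum[of i UNIV k] by auto

lemma Ek_nz:
  assumes G: "Good M U V T Q" and j: "j1 \<noteq> j2" and k: "k \<in> Iset j1 j2 K p"
    and M: "int K + \<bar>p\<bar> \<le> M"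
  shows "Ek j1 j2 p k U V Q (U j2 * Q powi p) \<noteq> 0"
proof -
  have Q: "Q \<noteq> 0" and U2: "U j2 \<noteq> 0" using G by (auto simp: Good_def)
  have h: "int (k j2) \<ge> p" "int (k j1) + p \<ge> int (k j2) + 1" using k by (auto simp: Iset_def)
  have kb: "\<And>i. int (k i) \<le> int K" using kle[OF k] by auto
  have Mk: "\<And>i. int (k i) \<le> M" using kb M by (smt (verit))
  define x0 where "x0 = U j2 * Q powi p"
  have su: "(U(j1 := x0)) j1 = x0" "(U(j1 := x0)) j2 = U j2" using j by auto
  have f1: "qpoch_ex Q (1 * inverse Q ^ k j2 * x0 / U j2) (k j1) (nat (int (k j2) - p)) \<noteq> 0"
    unfolding x0_def conv1[OF Q U2]
    by (rule nz_qpoch_exQ[OF Q Good_q[OF G]]) (use h kb[of j1] kb[of j2] M in auto)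
  have f2: "Bq k (U(j1 := x0)) 1 Q j2 j1 \<noteq> 0"
    unfolding Bq_def su unfolding x0_def conv2[OF Q U2]
    by (rule nz_qpochQ[OF Q Good_q[OF G]]) (use h kb[of j1] kb[of j2] M in auto)
  have f3: "RestP j1 j2 k (U(j1 := x0)) V 1 1 Q \<noteq> 0"
    unfolding x0_def by (rule RestP_nz[OF G j kb M])
  show ?thesis
    unfolding Ek_def x0_def[symmetric]
    using Aq_nz[where k=k and i=j1, OF G Mk[of j1]] Aq_nz[where k=k and i=j2, OF G Mk[of j2]] f1 f2 f3 by simp
qed

lemma X_core:
  fixes j1 j2 :: "'n::finite"
  assumes j: "j1 \<noteq> j2" and k: "k \<in> Iset j1 j2 K p" and G: "Good M U V T Q" and M: "int K + \<bar>p\<bar> \<le> M"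
    and A: "open A" "w0 \<in> A" and xh: "x holomorphic_on A" and xnz: "\<And>w. w \<in> A \<Longrightarrow> x w \<noteq> 0"
    and x0: "x w0 = U j2 * Q powi p" and xd: "(x has_field_derivative x') (at w0)" and x'nz: "x' \<noteq> 0"
  shows "residue (\<lambda>w. Xfun k (U(j1 := x w)) V T Q) w0
       + residue (\<lambda>w. Xfun (swapmap j1 j2 p k) (U(j1 := x w)) V T Q) w0 = 0"
proof -
  have Q: "Q \<noteq> 0" and T: "T \<noteq> 0" and U: "\<forall>i. U i \<noteq> 0" and V: "\<forall>a. V a \<noteq> 0"
    using G by (auto simp: Good_def)
  have U2: "U j2 \<noteq> 0" using U by auto
  have h: "int (k j2) \<ge> p" "int (k j1) + p \<ge> int (k j2) + 1" using k by (auto simp: Iset_def)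
  define k' where "k' = swapmap j1 j2 p k"
  define N where "N = (\<lambda>w. XP k (U(j1 := x w)) V (inverse T) T Q)"
  define N' where "N' = (\<lambda>w. XP k' (U(j1 := x w)) V (inverse T) T Q)"
  define Dn where "Dn = (\<lambda>w. XP k (U(j1 := x w)) V 1 1 Q)"
  define Dn' where "Dn' = (\<lambda>w. XP k' (U(j1 := x w)) V 1 1 Q)"
  define Z where "Z = (\<lambda>w. zf p Q (U j2) (x w))"
  define E where "E = (\<lambda>w. Ek j1 j2 p k U V Q (x w))"
  define E' where "E' = (\<lambda>w. Ek' j1 j2 p k U V Q (x w))"
  define g' where "g' = Q powi (- p) * x' / U j2"
  have g0: "Q powi (- p) * x w0 / U j2 = 1"
    unfolding x0 using Q U2 by (simp add: power_int_minus field_simps)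
  have dg: "((\<lambda>w. Q powi (- p) * x w / U j2) has_field_derivative g') (at w0)"
    unfolding g'_def using U2 by (auto intro!: derivative_eq_intros xd)
  have dZ: "(Z has_field_derivative (2 * g')) (at w0)"
  proof -
    have "((\<lambda>w. Q powi (- p) * x w / U j2 - inverse (Q powi (- p) * x w / U j2)) has_field_derivative
        (g' - (- (inverse (Q powi (- p) * x w0 / U j2) * g' * inverse (Q powi (- p) * x w0 / U j2))))) (at w0)"
      by (intro DERIV_diff dg DERIV_inverse') (simp add: g0)
    then show ?thesis unfolding Z_def zf_def g0 by simp
  qed
  have dZ': "((\<lambda>w. - Z w) has_field_derivative (- (2 * g'))) (at w0)"
    by (rule DERIV_minus[OF dZ])
  have Z0: "Z w0 = 0" unfolding Z_def zf_def g0 by simp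
  have g'nz: "2 * g' \<noteq> 0" using Q U2 x'nz by (simp add: g'_def)
  have E0: "E w0 \<noteq> 0" unfolding E_def x0 by (rule Ek_nz[OF G j k M])
  have EE: "E' w0 = E w0" unfolding E_def E'_def x0 by (rule Ek_eq[where k=k and U=U, OF j Q U2 h, symmetric])
  have NN: "N' w0 = N w0" unfolding N_def N'_def x0 k'_def by (rule Num_eq[where k=k and U=U, OF j Q U2 h, symmetric])
  have hN: "N holomorphic_on A" "N' holomorphic_on A" unfolding N_def N'_def
    by (intro XP_holo xh xnz U V Q T; simp add: T)+
  have hD: "Dn holomorphic_on A" "Dn' holomorphic_on A" unfolding Dn_def Dn'_def
    by (intro XP_holo xh xnz U V Q; simp)+
  have hE: "E holomorphic_on A" "E' holomorphic_on A" unfolding E_def E'_def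
    by (rule Ek_holo[OF xh xnz U V Q], assumption, rule Ek'_holo[OF xh xnz U V Q], assumption)
  have f1: "\<And>w. w \<in> A \<Longrightarrow> Dn w = Z w * E w"
    unfolding Dn_def Z_def E_def by (rule Den_fac[OF j Q h])
  have f2: "\<And>w. w \<in> A \<Longrightarrow> Dn' w = (- Z w) * E' w"
    unfolding Dn'_def Z_def E'_def k'_def using Den_fac'[OF j Q h] by simp
  have r1: "residue (\<lambda>w. N w / Dn w) w0 = N w0 / (2 * g' * E w0)"
    by (rule res_abstract[OF A hN(1) hD(1) hE(1) f1 dZ Z0 g'nz E0])
  have r2: "residue (\<lambda>w. N' w / Dn' w) w0 = N' w0 / (- (2 * g') * E' w0)"
    by (rule res_abstract[OF A hN(2) hD(2) hE(2) f2 dZ']) (use Z0 g'nz E0 EE in auto)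
  have e1: "(\<lambda>w. Xfun k (U(j1 := x w)) V T Q) = (\<lambda>w. N w / Dn w)"
    by (simp add: Xfun_XP N_def Dn_def)
  have e2: "(\<lambda>w. Xfun k' (U(j1 := x w)) V T Q) = (\<lambda>w. N' w / Dn' w)"
    by (simp add: Xfun_XP N'_def Dn'_def)
  show ?thesis
    unfolding k'_def[symmetric] e1 e2 r1 r2 NN EE by simp
qed

lemma sb_notnonpos:
  fixes s0 w :: complex
  assumes s0: "s0 \<noteq> 0" and w: "w \<in> ball (s0^2) (norm (s0^2))"
  shows "w / s0^2 \<notin> \<real>\<^sub>\<le>\<^sub>0" "w / s0^2 \<noteq> 0"
proof -
  have n: "norm (s0^2) > 0" using s0 by simp
  have s2: "s0^2 \<noteq> 0" using s0 by simp
  have "(w - s0^2) / s0^2 = w / s0^2 - 1" using s2 by (simp add: diff_divide_distrib)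
  then have "norm (w / s0^2 - 1) = norm (w - s0^2) / norm (s0^2)"
    by (metis norm_divide)
  also have "\<dots> < 1" using w n by (simp add: dist_norm norm_minus_commute)
  finally have lt: "norm (w / s0^2 - 1) < 1" .
  have "\<bar>Re (w / s0^2 - 1)\<bar> \<le> norm (w / s0^2 - 1)" by (rule abs_Re_le_cmod)
  then have "Re (w / s0^2) > 0" using lt by simp
  then show "w / s0^2 \<notin> \<real>\<^sub>\<le>\<^sub>0" "w / s0^2 \<noteq> 0" by (auto simp: complex_nonpos_Reals_iff)
qed

lemma sb_props:
  fixes s0 :: complex
  assumes s0: "s0 \<noteq> 0"
  shows "open (ball (s0^2) (norm (s0^2)))" "s0^2 \<in> ball (s0^2) (norm (s0^2))"
    "sqrt_branch s0 holomorphic_on ball (s0^2) (norm (s0^2))"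
    "\<And>w. w \<in> ball (s0^2) (norm (s0^2)) \<Longrightarrow> sqrt_branch s0 w \<noteq> 0"
    "sqrt_branch s0 (s0^2) = s0"
    "(sqrt_branch s0 has_field_derivative inverse (2 * s0)) (at (s0^2))"
proof -
  show "open (ball (s0^2) (norm (s0^2)))" by simp
  show "s0^2 \<in> ball (s0^2) (norm (s0^2))" using s0 by simp
  show "sqrt_branch s0 holomorphic_on ball (s0^2) (norm (s0^2))"
    unfolding sqrt_branch_def[abs_def]
    by (intro holomorphic_intros) (use sb_notnonpos[OF s0] in auto)
  show "\<And>w. w \<in> ball (s0^2) (norm (s0^2)) \<Longrightarrow> sqrt_branch s0 w \<noteq> 0"
    unfolding sqrt_branch_def using sb_notnonpos[OF s0] s0 by auto
  show "sqrt_branch s0 (s0^2) = s0" unfolding sqrt_branch_def using s0 by simp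
  have s2: "s0^2 \<noteq> 0" using s0 by simp
  have d1: "((\<lambda>w. w / s0^2) has_field_derivative 1 / s0^2) (at (s0^2))"
    using DERIV_cdivide[OF DERIV_ident, of "s0^2" "s0^2"] by simp
  have d2: "((\<lambda>w. csqrt (w / s0^2)) has_field_derivative (1/s0^2) / (2 * csqrt (s0^2/s0^2))) (at (s0^2))"
    by (rule has_field_derivative_csqrt'[OF d1]) (simp add: s2 s0)
  have "((\<lambda>w. s0 * csqrt (w / s0^2)) has_field_derivative s0 * ((1 / s0^2) / (2 * csqrt (s0^2 / s0^2)))) (at (s0^2))"
    by (rule DERIV_cmult[OF d2])
  moreover have "csqrt (s0^2 / s0^2) = 1" using s2 by simp
  moreover have "s0 * ((1 / s0^2) / (2 * 1)) = inverse (2 * s0)"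
    using s0 by (simp add: field_simps power2_eq_square)
  ultimately show "(sqrt_branch s0 has_field_derivative inverse (2 * s0)) (at (s0^2))"
    unfolding sqrt_branch_def[abs_def] by metis
qed

lemma Yfun_Xfun:
  "Yfun k su sv st sq = Xfun k (\<lambda>i. inverse (sv i)) (\<lambda>a. inverse (su a)) st sq"
proof -
  have B: "(\<Prod>(a,b)\<in>{(a,b). a \<noteq> b}.
        qpoch sq (inverse st * inverse sq ^ k a * sv a / sv b) (k b) /
        qpoch sq (inverse sq ^ k a * sv a / sv b) (k b))
      = (\<Prod>(i,j)\<in>{(i,j). i \<noteq> j}.
        qpoch sq (inverse st * inverse sq ^ k j * inverse (sv i) / inverse (sv j)) (k i) /
        qpoch sq (inverse sq ^ k j * inverse (sv i) / inverse (sv j)) (k i))"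
    by (rule prod.reindex_bij_witness[where i="\<lambda>(a,b). (b,a)" and j="\<lambda>(a,b). (b,a)"])
       (auto simp: divide_inverse ac_simps)
  have C: "(\<Prod>(a,j)\<in>UNIV.
        qpoch sq (st * su j / sv a) (k a) / qpoch sq (su j / sv a) (k a))
      = (\<Prod>(a,j)\<in>UNIV.
        qpoch sq (st * inverse (sv j) / inverse (su a)) (k j) / qpoch sq (inverse (sv j) / inverse (su a)) (k j))"
    by (rule prod.reindex_bij_witness[where i="\<lambda>(a,b). (b,a)" and j="\<lambda>(a,b). (b,a)"])
       (auto simp: divide_inverse ac_simps)
  show ?thesis unfolding Yfun_def Xfun_def B C ..
qed

lemma Good_sym:
  assumes "Good M U V T Q"
  shows "Good M (\<lambda>i. inverse (V i)) (\<lambda>a. inverse (U a)) T Q"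
proof -
  have e1: "inverse (V i) / inverse (V j) = V j / V i" for i j by (simp add: divide_inverse ac_simps)
  have e2: "inverse (U i) / inverse (U j) = U j / U i" for i j by (simp add: divide_inverse ac_simps)
  have e3: "inverse (V j) / inverse (U a) = U a / V j" for j a by (simp add: divide_inverse ac_simps)
  show ?thesis using assms unfolding Good_def e1 e2 e3 by (auto simp del: inverse_divide)
qed

lemma X_part:
  fixes i1 i2 :: "'n::finite"
  assumes j: "i1 \<noteq> i2" and k: "k \<in> Iset i1 i2 K p" and G: "Good M su sv st sq" and M: "int K + \<bar>p\<bar> \<le> M"
  shows "(let s0 = su i2 * sq powi p in
                    residue (\<lambda>w. Xfun k (su(i1 := sqrt_branch s0 w)) sv st sq) (s0 ^ 2)
                  + residue (\<lambda>w. Xfun (swapmap i1 i2 p k) (su(i1 := sqrt_branch s0 w)) sv st sq) (s0 ^ 2)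
                  = 0)"
proof -
  define s0 where "s0 = su i2 * sq powi p"
  have s0: "s0 \<noteq> 0" using G by (auto simp: Good_def s0_def)
  note sb = sb_props[OF s0]
  have "residue (\<lambda>w. Xfun k (su(i1 := sqrt_branch s0 w)) sv st sq) (s0 ^ 2)
      + residue (\<lambda>w. Xfun (swapmap i1 i2 p k) (su(i1 := sqrt_branch s0 w)) sv st sq) (s0 ^ 2) = 0"
    by (rule X_core[OF j k G M sb(1,2,3,4)]) (use sb(5,6) s0 in \<open>auto simp: s0_def\<close>)
  then show ?thesis by (simp add: s0_def Let_def)
qed

lemma Y_part:
  fixes i1 i2 :: "'n::finite"
  assumes j: "i1 \<noteq> i2" and k: "k \<in> Iset i1 i2 K p" and G: "Good M su sv st sq" and M: "int K + \<bar>p\<bar> \<le> M"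
  shows "(let s0 = sv i1 * sq powi p in
                    residue (\<lambda>w. Yfun k su (sv(i2 := sqrt_branch s0 w)) st sq) (s0 ^ 2)
                  + residue (\<lambda>w. Yfun (swapmap i1 i2 p k) su (sv(i2 := sqrt_branch s0 w)) st sq) (s0 ^ 2)
                  = 0)"
proof -
  define s0 where "s0 = sv i1 * sq powi p"
  have Q: "sq \<noteq> 0" using G by (auto simp: Good_def)
  have s0: "s0 \<noteq> 0" using G by (auto simp: Good_def s0_def)
  note sb = sb_props[OF s0]
  define U' where "U' = (\<lambda>i. inverse (sv i))"
  define V' where "V' = (\<lambda>a. inverse (su a))"
  define kk where "kk = swapmap i1 i2 p k"
  have G': "Good M U' V' st sq" unfolding U'_def V'_def by (rule Good_sym[OF G])
  have j': "i2 \<noteq> i1" using j by auto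
  have kk: "kk \<in> Iset i2 i1 K (- p)" using swapmap_I(1)[OF j k] by (simp add: kk_def IIset_eq)
  have kkk: "swapmap i2 i1 (- p) kk = k" using swapmap_I(2)[OF j k] by (simp add: kk_def swapmap_sym[OF j])
  have M': "int K + \<bar>- p\<bar> \<le> M" using M by simp
  define x where "x = (\<lambda>w. inverse (sqrt_branch s0 w))"
  have xh: "x holomorphic_on ball (s0^2) (norm (s0^2))"
    unfolding x_def by (intro holomorphic_intros sb(3)) (use sb(4) in auto)
  have xnz: "\<And>w. w \<in> ball (s0^2) (norm (s0^2)) \<Longrightarrow> x w \<noteq> 0" unfolding x_def using sb(4) by auto
  have x0: "x (s0^2) = U' i1 * sq powi (- p)"
    unfolding x_def sb(5) unfolding U'_def s0_def by (simp add: power_int_minus)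
  have xd: "(x has_field_derivative - (inverse s0 * inverse (2 * s0) * inverse s0)) (at (s0^2))"
    unfolding x_def using DERIV_inverse'[OF sb(6)] sb(5) s0 by simp
  have x'nz: "- (inverse s0 * inverse (2 * s0) * inverse s0) \<noteq> 0" using s0 by simp
  have R: "residue (\<lambda>w. Xfun kk (U'(i2 := x w)) V' st sq) (s0^2)
      + residue (\<lambda>w. Xfun (swapmap i2 i1 (- p) kk) (U'(i2 := x w)) V' st sq) (s0^2) = 0"
    by (rule X_core[OF j' kk G' M' sb(1,2) xh xnz x0 xd x'nz])
  have YX: "Yfun kk' su (sv(i2 := sqrt_branch s0 w)) st sq = Xfun kk' (U'(i2 := x w)) V' st sq" for kk' w
  proof -
    have "(\<lambda>i. inverse ((sv(i2 := sqrt_branch s0 w)) i)) = U'(i2 := x w)"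
      by (auto simp: fun_eq_iff U'_def x_def)
    then show ?thesis unfolding Yfun_Xfun V'_def by simp
  qed
  have "residue (\<lambda>w. Yfun k su (sv(i2 := sqrt_branch s0 w)) st sq) (s0 ^ 2)
      + residue (\<lambda>w. Yfun kk su (sv(i2 := sqrt_branch s0 w)) st sq) (s0 ^ 2) = 0"
    unfolding YX using R kkk by (simp add: add.commute)
  then show ?thesis by (simp add: s0_def Let_def kk_def)
qed

lemma evne: "isCont (f :: 'a::t2_space \<Rightarrow> complex) z \<Longrightarrow> f z \<noteq> c \<Longrightarrow> eventually (\<lambda>y. f y \<noteq> c) (nhds z)"
  by (rule tendsto_imp_eventually_ne) (simp add: isCont_def tendsto_at_iff_tendsto_nhds)

lemma isCont_pU: "isCont (\<lambda>y::('n::finite \<Rightarrow> complex) \<times> 'b::t2_space. fst y i) z"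
proof -
  have "continuous_on UNIV (\<lambda>y::('n \<Rightarrow> complex) \<times> 'b. fst y i)"
    by (rule continuous_on_product_then_coordinatewise) (intro continuous_intros)
  then show ?thesis by (metis UNIV_I continuous_on_eq_continuous_at open_UNIV)
qed

lemma isCont_pV: "isCont (\<lambda>y::'a::t2_space \<times> ('n::finite \<Rightarrow> complex) \<times> 'b::t2_space. fst (snd y) i) z"
proof -
  have "continuous_on UNIV (\<lambda>y::'a \<times> ('n \<Rightarrow> complex) \<times> 'b. fst (snd y) i)"
    by (rule continuous_on_product_then_coordinatewise) (intro continuous_intros)
  then show ?thesis by (metis UNIV_I continuous_on_eq_continuous_at open_UNIV)
qed

definition GS :: "int \<Rightarrow> (('n::finite \<Rightarrow> complex) \<times> ('n \<Rightarrow> complex) \<times> complex \<times> complex) set" where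
  "GS M = {(su, sv, st, sq). Good M su sv st sq}"

lemma open_GS: "open (GS M :: (('n::finite \<Rightarrow> complex) \<times> ('n \<Rightarrow> complex) \<times> complex \<times> complex) set)"
proof (subst open_subopen, intro ballI)
  fix z :: "('n \<Rightarrow> complex) \<times> ('n \<Rightarrow> complex) \<times> complex \<times> complex"
  assume zG: "z \<in> GS M"
  obtain su sv st sq where z: "z = (su, sv, st, sq)" by (cases z) auto
  have G: "Good M su sv st sq" using zG z by (simp add: GS_def)
  define pU where "pU = (\<lambda>y::('n \<Rightarrow> complex) \<times> ('n \<Rightarrow> complex) \<times> complex \<times> complex. fst y)"
  define pV where "pV = (\<lambda>y::('n \<Rightarrow> complex) \<times> ('n \<Rightarrow> complex) \<times> complex \<times> complex. fst (snd y))"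
  define pT where "pT = (\<lambda>y::('n \<Rightarrow> complex) \<times> ('n \<Rightarrow> complex) \<times> complex \<times> complex. fst (snd (snd y)))"
  define pQ where "pQ = (\<lambda>y::('n \<Rightarrow> complex) \<times> ('n \<Rightarrow> complex) \<times> complex \<times> complex. snd (snd (snd y)))"
  have cU: "\<And>i. isCont (\<lambda>y. pU y i) z" unfolding pU_def by (rule isCont_pU)
  have cV: "\<And>i. isCont (\<lambda>y. pV y i) z" unfolding pV_def by (rule isCont_pV)
  have cT: "isCont pT z" unfolding pT_def by (intro continuous_intros)
  have cQ: "isCont pQ z" unfolding pQ_def by (intro continuous_intros)
  have zv: "pU z = su" "pV z = sv" "pT z = st" "pQ z = sq" by (auto simp: z pU_def pV_def pT_def pQ_def)
  have Q: "sq \<noteq> 0" and T: "st \<noteq> 0" and U: "\<And>i. su i \<noteq> 0" and V: "\<And>i. sv i \<noteq> 0"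
    using G by (auto simp: Good_def)
  have e1: "eventually (\<lambda>y. pT y \<noteq> 0) (nhds z)" by (rule evne[OF cT]) (simp add: zv T)
  have e2: "eventually (\<lambda>y. pQ y \<noteq> 0) (nhds z)" by (rule evne[OF cQ]) (simp add: zv Q)
  have e3: "eventually (\<lambda>y. \<forall>i. pU y i \<noteq> 0) (nhds z)"
    by (rule eventually_all_finite, rule evne[OF cU]) (simp add: zv U)
  have e4: "eventually (\<lambda>y. \<forall>i. pV y i \<noteq> 0) (nhds z)"
    by (rule eventually_all_finite, rule evne[OF cV]) (simp add: zv V)
  have e5: "eventually (\<lambda>y. \<forall>m\<in>{-M..M}. m \<noteq> 0 \<longrightarrow> (pQ y powi m)^2 \<noteq> 1) (nhds z)"
  proof (rule eventually_ball_finite, simp, intro ballI)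
    fix m assume m: "m \<in> {-M..M}"
    show "eventually (\<lambda>y. m \<noteq> 0 \<longrightarrow> (pQ y powi m)^2 \<noteq> 1) (nhds z)"
    proof (cases "m = 0")
      case False
      have "eventually (\<lambda>y. (pQ y powi m)^2 \<noteq> 1) (nhds z)"
        by (rule evne) (use cQ Q zv G False m in \<open>auto intro!: continuous_intros simp: Good_def\<close>)
      then show ?thesis by eventually_elim simp
    qed simp
  qed
  have e6: "eventually (\<lambda>y. \<forall>i j. \<forall>m\<in>{-M..M}. i \<noteq> j \<longrightarrow> (pQ y powi m * (pU y i / pU y j))^2 \<noteq> 1) (nhds z)"
  proof (intro eventually_all_finite eventually_ball_finite ballI, simp)
    fix i j :: 'n and m assume m: "m \<in> {-M..M}"
    show "eventually (\<lambda>y. i \<noteq> j \<longrightarrow> (pQ y powi m * (pU y i / pU y j))^2 \<noteq> 1) (nhds z)"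
    proof (cases "i = j")
      case False
      have "eventually (\<lambda>y. (pQ y powi m * (pU y i / pU y j))^2 \<noteq> 1) (nhds z)"
        by (rule evne) (use cQ cU Q U zv G False m in \<open>auto intro!: continuous_intros simp: Good_def\<close>)
      then show ?thesis by eventually_elim simp
    qed simp
  qed
  have e7: "eventually (\<lambda>y. \<forall>i j. \<forall>m\<in>{-M..M}. i \<noteq> j \<longrightarrow> (pQ y powi m * (pV y i / pV y j))^2 \<noteq> 1) (nhds z)"
  proof (intro eventually_all_finite eventually_ball_finite ballI, simp)
    fix i j :: 'n and m assume m: "m \<in> {-M..M}"
    show "eventually (\<lambda>y. i \<noteq> j \<longrightarrow> (pQ y powi m * (pV y i / pV y j))^2 \<noteq> 1) (nhds z)"
    proof (cases "i = j")
      case False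
      have "eventually (\<lambda>y. (pQ y powi m * (pV y i / pV y j))^2 \<noteq> 1) (nhds z)"
        by (rule evne) (use cQ cV Q V zv G False m in \<open>auto intro!: continuous_intros simp: Good_def\<close>)
      then show ?thesis by eventually_elim simp
    qed simp
  qed
  have e8: "eventually (\<lambda>y. \<forall>i a. \<forall>m\<in>{-M..M}. (pQ y powi m * (pU y i / pV y a))^2 \<noteq> 1) (nhds z)"
  proof (intro eventually_all_finite eventually_ball_finite ballI, simp)
    fix i a :: 'n and m assume m: "m \<in> {-M..M}"
    show "eventually (\<lambda>y. (pQ y powi m * (pU y i / pV y a))^2 \<noteq> 1) (nhds z)"
      by (rule evne) (use cQ cU cV Q V zv G m in \<open>auto intro!: continuous_intros simp: Good_def\<close>)
  qed
  have "eventually (\<lambda>y. Good M (pU y) (pV y) (pT y) (pQ y)) (nhds z)"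
    using e1 e2 e3 e4 e5 e6 e7 e8
  proof eventually_elim
    case (elim y)
    then show ?case unfolding Good_def by (simp add: abs_le_iff)
  qed
  then obtain S where S: "open S" "z \<in> S" "\<And>y. y \<in> S \<Longrightarrow> Good M (pU y) (pV y) (pT y) (pQ y)"
    unfolding eventually_nhds by blast
  have "S \<subseteq> GS M"
  proof
    fix y assume "y \<in> S"
    then have "Good M (pU y) (pV y) (pT y) (pQ y)" by (rule S(3))
    then show "y \<in> GS M" by (cases y) (auto simp: GS_def pU_def pV_def pT_def pQ_def)
  qed
  then show "\<exists>T. open T \<and> z \<in> T \<and> T \<subseteq> GS M" using S by blast
qed

lemma in_closure_path:
  fixes \<gamma> :: "real \<Rightarrow> 'a::topological_space"
  assumes c: "continuous_on UNIV \<gamma>" and ev: "eventually (\<lambda>t. \<gamma> t \<in> S) (at_right 0)"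
  shows "\<gamma> 0 \<in> closure S"
proof -
  have "(\<gamma> \<longlongrightarrow> \<gamma> 0) (at 0)" using c by (simp add: continuous_on_def)
  then have t: "(\<gamma> \<longlongrightarrow> \<gamma> 0) (at_right 0)" by (rule tendsto_mono[OF at_le, rotated]) simp
  have ev': "eventually (\<lambda>t. \<gamma> t \<in> closure S) (at_right 0)"
    using ev by eventually_elim (use closure_subset in auto)
  show ?thesis by (rule Lim_in_closed_set[OF closed_closure ev' _ t]) simp
qed

lemma ev_add: "eventually (\<lambda>t. c + of_real t \<noteq> (0::complex)) (at_right (0::real))"
proof (cases "c = 0")
  case True
  show ?thesis using eventually_at_right_less[of "0::real"] by eventually_elim (simp add: True)
next
  case False
  have "((\<lambda>t. c + of_real t) \<longlongrightarrow> c + of_real 0) (at_right (0::real))"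
    by (intro tendsto_intros)
  then show ?thesis using False by (intro tendsto_imp_eventually_ne) auto
qed

lemma ev_exp:
  fixes d :: int
  assumes "d \<noteq> 0"
  shows "eventually (\<lambda>t. c * exp (of_real (t * of_int d)) \<noteq> (1::complex)) (at_right (0::real))"
proof (cases "c = 1")
  case True
  show ?thesis using eventually_at_right_less[of "0::real"]
  proof eventually_elim
    case (elim t)
    then have "t * of_int d \<noteq> 0" using assms by simp
    then have "exp (t * of_int d) \<noteq> 1" by simp
    then have "exp (of_real (t * of_int d)) \<noteq> (1::complex)"
      by (metis exp_of_real of_real_eq_1_iff)
    then show ?case using True by simp
  qed
next
  case False
  have "((\<lambda>t. c * exp (of_real (t * of_int d))) \<longlongrightarrow> c * exp (of_real (0 * of_int d))) (at_right (0::real))"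
    by (intro tendsto_intros)
  then show ?thesis using False by (intro tendsto_imp_eventually_ne) auto
qed

lemma closure_G0:
  "closure {(su, sv, st, sq). st \<noteq> 0 \<and> sq \<noteq> 0 \<and> (\<forall>i. su i \<noteq> 0) \<and> (\<forall>a. sv a \<noteq> 0)}
     = (UNIV :: (('n::finite \<Rightarrow> complex) \<times> ('n \<Rightarrow> complex) \<times> complex \<times> complex) set)"
proof (rule set_eqI, rule iffI)
  fix z :: "('n \<Rightarrow> complex) \<times> ('n \<Rightarrow> complex) \<times> complex \<times> complex"
  obtain su sv st sq where z: "z = (su, sv, st, sq)" by (cases z) auto
  define \<gamma> where "\<gamma> = (\<lambda>t::real. ((\<lambda>i. su i + of_real t), (\<lambda>a. sv a + of_real t), st + of_real t, sq + of_real t))"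
  have c: "continuous_on UNIV \<gamma>" unfolding \<gamma>_def
    by (intro continuous_intros continuous_on_coordinatewise_then_product)
  have "eventually (\<lambda>t. \<gamma> t \<in> {(su, sv, st, sq). st \<noteq> 0 \<and> sq \<noteq> 0 \<and> (\<forall>i. su i \<noteq> 0) \<and> (\<forall>a. sv a \<noteq> 0)}) (at_right 0)"
    using ev_add[of st] ev_add[of sq] eventually_all_finite[of "\<lambda>t i. su i + of_real t \<noteq> 0", OF ev_add]
      eventually_all_finite[of "\<lambda>t i. sv i + of_real t \<noteq> 0", OF ev_add]
    by eventually_elim (simp add: \<gamma>_def)
  from in_closure_path[OF c this]
  show "z \<in> closure {(su, sv, st, sq). st \<noteq> 0 \<and> sq \<noteq> 0 \<and> (\<forall>i. su i \<noteq> 0) \<and> (\<forall>a. sv a \<noteq> 0)}"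
    by (simp add: \<gamma>_def z)
qed simp

lemma alg:
  fixes t :: real and sq a b :: complex
  shows "((sq * exp (of_real t)) powi m * ((a * exp (of_real t) ^ r1) / (b * exp (of_real t) ^ r2)))^2
       = (sq powi m * (a / b))^2 * exp (of_real (t * of_int (2 * (m + int r1 - int r2))))"
proof -
  define x1 where "x1 = exp (of_int m * (of_real t :: complex))"
  define x2 where "x2 = exp (of_nat r1 * (of_real t :: complex))"
  define x3 where "x3 = exp (of_nat r2 * (of_real t :: complex))"
  have p1: "exp (of_real t :: complex) powi m = x1" unfolding x1_def by (rule exp_power_int)
  have p2: "exp (of_real t :: complex) ^ r1 = x2" unfolding x2_def by (rule exp_of_nat_mult[symmetric])
  have p3: "exp (of_real t :: complex) ^ r2 = x3" unfolding x3_def by (rule exp_of_nat_mult[symmetric])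
  have "x1 * x2 / x3 = exp (of_int m * of_real t + of_nat r1 * of_real t - of_nat r2 * of_real t)"
    unfolding x1_def x2_def x3_def by (simp add: exp_add exp_diff)
  then have "(x1 * x2 / x3)^2 = exp (of_nat 2 * (of_int m * of_real t + of_nat r1 * of_real t - of_nat r2 * of_real t))"
    by (simp only: exp_of_nat_mult)
  also have "of_nat 2 * (of_int m * of_real t + of_nat r1 * of_real t - of_nat r2 * of_real t)
      = (of_real (t * of_int (2 * (m + int r1 - int r2))) :: complex)"
    by (simp add: algebra_simps)
  finally have e: "exp (of_real (t * of_int (2 * (m + int r1 - int r2)))) = (x1 * x2 / x3)^2" ..
  show ?thesis
    unfolding e power_int_mult_distrib p1 p2 p3
    by (simp add: divide_inverse inverse_mult_distrib ac_simps power_mult_distrib)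
qed

lemma int_sep: "x \<noteq> 0 \<Longrightarrow> \<bar>m\<bar> < N \<Longrightarrow> m + N * x \<noteq> (0::int)"
proof
  assume x: "x \<noteq> 0" and m: "\<bar>m\<bar> < N" and e: "m + N * x = 0"
  have N: "N \<ge> 0" using m by simp
  have "\<bar>x\<bar> \<ge> 1" using x by simp
  then have "N * \<bar>x\<bar> \<ge> N" using N by (simp add: mult_le_cancel_left1)
  moreover have "\<bar>m\<bar> = N * \<bar>x\<bar>" using e N by (simp add: abs_mult eq_neg_iff_add_eq_0[symmetric])
  ultimately show False using m by simp
qed

lemma G0_closure:
  fixes su sv :: "'n::finite \<Rightarrow> complex"
  assumes T: "st \<noteq> 0" and Q: "sq \<noteq> 0" and U: "\<forall>i. su i \<noteq> 0" and V: "\<forall>a. sv a \<noteq> 0"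
  shows "(su, sv, st, sq) \<in> closure (GS M)"
proof -
  define N :: nat where "N = 2 * nat \<bar>M\<bar> + 1"
  define rU where "rU = (\<lambda>i::'n. 2 * N * to_nat i)"
  define rV where "rV = (\<lambda>i::'n. 2 * N * to_nat i + N)"
  define E where "E = (\<lambda>t::real. exp (of_real t :: complex))"
  define \<gamma> where "\<gamma> = (\<lambda>t. ((\<lambda>i. su i * E t ^ rU i), (\<lambda>a. sv a * E t ^ rV a), st, sq * E t))"
  have c: "continuous_on UNIV \<gamma>" unfolding \<gamma>_def E_def
    by (intro continuous_intros continuous_on_coordinatewise_then_product)
  have g0: "\<gamma> 0 = (su, sv, st, sq)" by (simp add: \<gamma>_def E_def)
  have Enz: "\<And>t. E t \<noteq> 0" by (simp add: E_def)
  have mN: "\<And>m. m \<in> {-M..M} \<Longrightarrow> \<bar>m\<bar> < int N" by (auto simp: N_def)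
  have inj: "\<And>i j::'n. i \<noteq> j \<Longrightarrow> int (to_nat i) - int (to_nat j) \<noteq> 0"
    by (metis eq_iff_diff_eq_0 inj_eq inj_to_nat of_nat_eq_iff)
  have eQ: "eventually (\<lambda>t. \<forall>m\<in>{-M..M}. m \<noteq> 0 \<longrightarrow> ((sq * E t) powi m)^2 \<noteq> 1) (at_right 0)"
  proof (rule eventually_ball_finite, simp, intro ballI)
    fix m assume m: "m \<in> {-M..M}"
    show "eventually (\<lambda>t. m \<noteq> 0 \<longrightarrow> ((sq * E t) powi m)^2 \<noteq> 1) (at_right 0)"
    proof (cases "m = 0")
      case False
      have "eventually (\<lambda>t. (sq powi m * (1 / 1))^2 * exp (of_real (t * of_int (2 * (m + int 0 - int 0)))) \<noteq> (1::complex)) (at_right 0)"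
        by (rule ev_exp) (use False in simp)
      then show ?thesis
      proof eventually_elim
        case (elim t)
        then show ?case using alg[of sq t m 1 0 1 0] by (simp add: E_def)
      qed
    qed simp
  qed
  have eUU: "eventually (\<lambda>t. \<forall>i j. \<forall>m\<in>{-M..M}. i \<noteq> j \<longrightarrow>
        ((sq * E t) powi m * ((su i * E t ^ rU i) / (su j * E t ^ rU j)))^2 \<noteq> 1) (at_right 0)"
  proof (intro eventually_all_finite eventually_ball_finite ballI, simp)
    fix i j :: 'n and m assume m: "m \<in> {-M..M}"
    show "eventually (\<lambda>t. i \<noteq> j \<longrightarrow> ((sq * E t) powi m * ((su i * E t ^ rU i) / (su j * E t ^ rU j)))^2 \<noteq> 1) (at_right 0)"
    proof (cases "i = j")
      case False
      have d: "m + int (rU i) - int (rU j) \<noteq> 0"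
        using int_sep[OF inj[OF False] mN[OF m, THEN less_le_trans, of "int (2 * N)"]]
        by (simp add: rU_def algebra_simps)
      have "eventually (\<lambda>t. (sq powi m * (su i / su j))^2 * exp (of_real (t * of_int (2 * (m + int (rU i) - int (rU j))))) \<noteq> (1::complex)) (at_right 0)"
        by (rule ev_exp) (use d in simp)
      then show ?thesis
      proof eventually_elim
        case (elim t)
        then show ?case using alg[of sq t m "su i" "rU i" "su j" "rU j"] by (simp add: E_def)
      qed
    qed simp
  qed
  have eVV: "eventually (\<lambda>t. \<forall>i j. \<forall>m\<in>{-M..M}. i \<noteq> j \<longrightarrow>
        ((sq * E t) powi m * ((sv i * E t ^ rV i) / (sv j * E t ^ rV j)))^2 \<noteq> 1) (at_right 0)"
  proof (intro eventually_all_finite eventually_ball_finite ballI, simp)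
    fix i j :: 'n and m assume m: "m \<in> {-M..M}"
    show "eventually (\<lambda>t. i \<noteq> j \<longrightarrow> ((sq * E t) powi m * ((sv i * E t ^ rV i) / (sv j * E t ^ rV j)))^2 \<noteq> 1) (at_right 0)"
    proof (cases "i = j")
      case False
      have d: "m + int (rV i) - int (rV j) \<noteq> 0"
        using int_sep[OF inj[OF False] mN[OF m, THEN less_le_trans, of "int (2 * N)"]]
        by (simp add: rV_def algebra_simps)
      have "eventually (\<lambda>t. (sq powi m * (sv i / sv j))^2 * exp (of_real (t * of_int (2 * (m + int (rV i) - int (rV j))))) \<noteq> (1::complex)) (at_right 0)"
        by (rule ev_exp) (use d in simp)
      then show ?thesis
      proof eventually_elim
        case (elim t)
        then show ?case using alg[of sq t m "sv i" "rV i" "sv j" "rV j"] by (simp add: E_def)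
      qed
    qed simp
  qed
  have eUV: "eventually (\<lambda>t. \<forall>j a. \<forall>m\<in>{-M..M}.
        ((sq * E t) powi m * ((su j * E t ^ rU j) / (sv a * E t ^ rV a)))^2 \<noteq> 1) (at_right 0)"
  proof (intro eventually_all_finite eventually_ball_finite ballI, simp)
    fix j a :: 'n and m assume m: "m \<in> {-M..M}"
    have x: "2 * (int (to_nat j) - int (to_nat a)) - 1 \<noteq> 0" by presburger
    have d: "m + int (rU j) - int (rV a) \<noteq> 0"
      using int_sep[OF x mN[OF m]] by (simp add: rU_def rV_def algebra_simps)
    have "eventually (\<lambda>t. (sq powi m * (su j / sv a))^2 * exp (of_real (t * of_int (2 * (m + int (rU j) - int (rV a))))) \<noteq> (1::complex)) (at_right 0)"
      by (rule ev_exp) (use d in simp)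
    then show "eventually (\<lambda>t. ((sq * E t) powi m * ((su j * E t ^ rU j) / (sv a * E t ^ rV a)))^2 \<noteq> 1) (at_right 0)"
    proof eventually_elim
      case (elim t)
      then show ?case using alg[of sq t m "su j" "rU j" "sv a" "rV a"] by (simp add: E_def)
    qed
  qed
  have "eventually (\<lambda>t. \<gamma> t \<in> GS M) (at_right 0)"
    using eQ eUU eVV eUV
  proof eventually_elim
    case (elim t)
    then show ?case
      unfolding \<gamma>_def GS_def Good_def using T Q U V Enz[of t]
      by (simp add: abs_le_iff)
  qed
  from in_closure_path[OF c this] show ?thesis unfolding g0 .
qed
lemma closure_GS: "closure (GS M) = (UNIV :: (('n::finite \<Rightarrow> complex) \<times> ('n \<Rightarrow> complex) \<times> complex \<times> complex) set)"
proof -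
  let ?G0 = "{(su, sv, st, sq). st \<noteq> 0 \<and> sq \<noteq> 0 \<and> (\<forall>i. su i \<noteq> 0) \<and> (\<forall>a. sv a \<noteq> 0)}
     :: (('n::finite \<Rightarrow> complex) \<times> ('n \<Rightarrow> complex) \<times> complex \<times> complex) set"
  have "?G0 \<subseteq> closure (GS M)"
  proof
    fix z assume "z \<in> ?G0"
    then obtain su sv st sq where "z = (su, sv, st, sq)" "st \<noteq> 0" "sq \<noteq> 0" "\<forall>i. su i \<noteq> 0" "\<forall>a. sv a \<noteq> 0"
      by auto
    then show "z \<in> closure (GS M)" using G0_closure by simp
  qed
  then have "closure ?G0 \<subseteq> closure (GS M)" by (rule closure_minimal) simp
  then have "UNIV \<subseteq> closure (GS M :: (('n::finite \<Rightarrow> complex) \<times> ('n \<Rightarrow> complex) \<times> complex \<times> complex) set)"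
    unfolding closure_G0 .
  then show ?thesis by blast
qed

theorem lemma1:
  fixes i1 i2 :: "'n::finite" and K :: nat and p :: int
  assumes "i1 \<noteq> i2"
  shows "bij_betw (swapmap i1 i2 p) (Iset i1 i2 K p) (IIset i1 i2 K p)
       \<and> bij_betw (swapmap i1 i2 p) (IIset i1 i2 K p) (Iset i1 i2 K p)
       \<and> (\<forall>k\<in>Iset i1 i2 K p.
            (\<exists>G :: (('n \<Rightarrow> complex) \<times> ('n \<Rightarrow> complex) \<times> complex \<times> complex) set.
               open G \<and> closure G = UNIV \<and>
               (\<forall>su sv st sq. (su, sv, st, sq) \<in> G \<longrightarrow>
                  (let s0 = su i2 * sq powi p in
                    residue (\<lambda>w. Xfun k (su(i1 := sqrt_branch s0 w)) sv st sq) (s0 ^ 2)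
                  + residue (\<lambda>w. Xfun (swapmap i1 i2 p k) (su(i1 := sqrt_branch s0 w)) sv st sq) (s0 ^ 2)
                  = 0))))
       \<and> (\<forall>k\<in>Iset i1 i2 K p.
            (\<exists>G :: (('n \<Rightarrow> complex) \<times> ('n \<Rightarrow> complex) \<times> complex \<times> complex) set.
               open G \<and> closure G = UNIV \<and>
               (\<forall>su sv st sq. (su, sv, st, sq) \<in> G \<longrightarrow>
                  (let s0 = sv i1 * sq powi p in
                    residue (\<lambda>w. Yfun k su (sv(i2 := sqrt_branch s0 w)) st sq) (s0 ^ 2)
                  + residue (\<lambda>w. Yfun (swapmap i1 i2 p k) su (sv(i2 := sqrt_branch s0 w)) st sq) (s0 ^ 2)
                  = 0))))"
proof -
  define M where "M = int K + \<bar>p\<bar>"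
  have M: "int K + \<bar>p\<bar> \<le> M" by (simp add: M_def)
  have o: "open (GS M :: (('n \<Rightarrow> complex) \<times> ('n \<Rightarrow> complex) \<times> complex \<times> complex) set)" by (rule open_GS)
  have c: "closure (GS M :: (('n \<Rightarrow> complex) \<times> ('n \<Rightarrow> complex) \<times> complex \<times> complex) set) = UNIV" by (rule closure_GS)
  have X: "\<forall>k\<in>Iset i1 i2 K p.
            (\<exists>G :: (('n \<Rightarrow> complex) \<times> ('n \<Rightarrow> complex) \<times> complex \<times> complex) set.
               open G \<and> closure G = UNIV \<and>
               (\<forall>su sv st sq. (su, sv, st, sq) \<in> G \<longrightarrow>
                  (let s0 = su i2 * sq powi p in
                    residue (\<lambda>w. Xfun k (su(i1 := sqrt_branch s0 w)) sv st sq) (s0 ^ 2)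
                  + residue (\<lambda>w. Xfun (swapmap i1 i2 p k) (su(i1 := sqrt_branch s0 w)) sv st sq) (s0 ^ 2)
                  = 0)))"
  proof
    fix k assume k: "k \<in> Iset i1 i2 K p"
    show "\<exists>G :: (('n \<Rightarrow> complex) \<times> ('n \<Rightarrow> complex) \<times> complex \<times> complex) set.
               open G \<and> closure G = UNIV \<and>
               (\<forall>su sv st sq. (su, sv, st, sq) \<in> G \<longrightarrow>
                  (let s0 = su i2 * sq powi p in
                    residue (\<lambda>w. Xfun k (su(i1 := sqrt_branch s0 w)) sv st sq) (s0 ^ 2)
                  + residue (\<lambda>w. Xfun (swapmap i1 i2 p k) (su(i1 := sqrt_branch s0 w)) sv st sq) (s0 ^ 2)
                  = 0))"
      using o c X_part[OF assms k _ M] by (intro exI[of _ "GS M"]) (auto simp: GS_def)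
  qed
  have Y: "\<forall>k\<in>Iset i1 i2 K p.
            (\<exists>G :: (('n \<Rightarrow> complex) \<times> ('n \<Rightarrow> complex) \<times> complex \<times> complex) set.
               open G \<and> closure G = UNIV \<and>
               (\<forall>su sv st sq. (su, sv, st, sq) \<in> G \<longrightarrow>
                  (let s0 = sv i1 * sq powi p in
                    residue (\<lambda>w. Yfun k su (sv(i2 := sqrt_branch s0 w)) st sq) (s0 ^ 2)
                  + residue (\<lambda>w. Yfun (swapmap i1 i2 p k) su (sv(i2 := sqrt_branch s0 w)) st sq) (s0 ^ 2)
                  = 0)))"
  proof
    fix k assume k: "k \<in> Iset i1 i2 K p"
    show "\<exists>G :: (('n \<Rightarrow> complex) \<times> ('n \<Rightarrow> complex) \<times> complex \<times> complex) set.
               open G \<and> closure G = UNIV \<and>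
               (\<forall>su sv st sq. (su, sv, st, sq) \<in> G \<longrightarrow>
                  (let s0 = sv i1 * sq powi p in
                    residue (\<lambda>w. Yfun k su (sv(i2 := sqrt_branch s0 w)) st sq) (s0 ^ 2)
                  + residue (\<lambda>w. Yfun (swapmap i1 i2 p k) su (sv(i2 := sqrt_branch s0 w)) st sq) (s0 ^ 2)
                  = 0))"
      using o c Y_part[OF assms k _ M] by (intro exI[of _ "GS M"]) (auto simp: GS_def)
  qed
  show ?thesis using bij_part[OF assms] X Y by blast
qed


end
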